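(* Assume $\operatorname{char}k=0$ or $\operatorname{char}k>N$, and let $V$ have homogeneous basis $x_1,\dots,x_d$. There is a homomorphism of superbialgebras $\varphi\colon\underline{\operatorname{end}}\,\mathsf S_N(V)\to\mathcal O(\mathsf E(V))$ with $\varphi(z^i_j)=x^i_j$ for all $i,j$; restricting the coaction of $\underline{\operatorname{end}}\,\mathsf S_N(V)$ on $V$ along $\varphi$ gives the coaction $x_j\mapsto\sum_ix_i\otimes x^i_j$.
   Context: $\mathsf S_N(V)=\mathsf T(V)/(c_{Y_N}(V^{\otimes N}))$ with $Y_N=\frac1{N!}\sum\operatorname{sgn}(\sigma)\sigma$ acting by the signed permutation action $c_\sigma(v_1\otimes\cdots\otimes v_N)=(-1)^{\sum_{(i,j)\in\mathrm{inv}(\sigma)}\hat v_i\hat v_j}v_{\sigma^{-1}(1)}\otimes\cdots\otimes v_{\sigma^{-1}(N)}$. For $\mathcal A=A(V,R)=\mathsf T(V)/(R)$, $\underline{\operatorname{end}}\,\mathcal A$ is the superbialgebra generated by $z^i_j=x^i\otimes x_j$ (parity $\hat i+\hat j$) with relations $c_{\pi_N}(R^\perp\otimes R)\subseteq(V^*\otimes V)^{\otimes N}$, $\Delta(z^i_j)=\sum_kz^i_k\otimes z^k_j$, $\varepsilon(z^i_j)=\delta^i_j$, coacting on $\mathcal A$ by $x_j\mapsto\sum_ix_i\otimes z^i_j$; here $R^\perp$ is the annihilator for $\langle f_1\otimes\cdots\otimes f_N,v_N\otimes\cdots\otimes v_1\rangle=\prod\langle f_i,v_i\rangle$ and $c_{\pi_N}(f_1\otimes\cdots\otimes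 f_N\otimes v_1\otimes\cdots\otimes v_N)=(-1)^{\sum_i\sum_{j>i}\hat v_i\hat f_j}(f_1\otimes v_1)\otimes\cdots\otimes(f_N\otimes v_N)$. $\mathcal O(\mathsf E(V))=k[x^i_j]$ is the free supercommutative superbialgebra on $x^i_j$ of parity $\hat i+\hat j$ with $\Delta(x^i_j)=\sum_kx^i_k\otimes x^k_j$, $\varepsilon(x^i_j)=\delta^i_j$. *)

theory Defs
  imports Main "HOL-Combinatorics.Permutations"
begin

text \<open>An element of the free associative k-algebra on a generator type 'g is a
finitely supported function from words ('g list) to k; the word [g1,...,gn]
stands for the monomial g1 g2 ... gn.\<close>

type_synonym ('g,'k) fa = "'g list \<Rightarrow> 'k"

definition fin :: "('g,'k::zero) fa \<Rightarrow> bool" where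
  "fin a \<longleftrightarrow> finite {w. a w \<noteq> 0}"

definition fa_mul :: "('g,'k::semiring_0) fa \<Rightarrow> ('g,'k) fa \<Rightarrow> ('g,'k) fa" where
  "fa_mul a b = (\<lambda>w. \<Sum>i\<le>length w. a (take i w) * b (drop i w))"

definition fa_one :: "('g,'k::{zero,one}) fa" where
  "fa_one = (\<lambda>w. if w = [] then 1 else 0)"

definition mono :: "'g list \<Rightarrow> ('g,'k::{zero,one}) fa" where
  "mono u = (\<lambda>w. if w = u then 1 else 0)"

definition gen :: "'g \<Rightarrow> ('g,'k::{zero,one}) fa" where
  "gen g = mono [g]"

definition fa_smult :: "'k \<Rightarrow> ('g,'k::times) fa \<Rightarrow> ('g,'k) fa" where
  "fa_smult c a = (\<lambda>w. c * a w)"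

inductive_set gen_ideal :: "('g,'k::comm_ring_1) fa set \<Rightarrow> ('g,'k) fa set"
  for S where
  zero: "(\<lambda>w. 0) \<in> gen_ideal S"
| base: "s \<in> S \<Longrightarrow> s \<in> gen_ideal S"
| add: "x \<in> gen_ideal S \<Longrightarrow> y \<in> gen_ideal S \<Longrightarrow> (\<lambda>w. x w + y w) \<in> gen_ideal S"
| smult: "x \<in> gen_ideal S \<Longrightarrow> fa_smult c x \<in> gen_ideal S"
| lmul: "x \<in> gen_ideal S \<Longrightarrow> fin a \<Longrightarrow> fa_mul a x \<in> gen_ideal S"
| rmul: "x \<in> gen_ideal S \<Longrightarrow> fin a \<Longrightarrow> fa_mul x a \<in> gen_ideal S"

inductive_set lin_span :: "('a \<Rightarrow> 'k::comm_ring_1) set \<Rightarrow> ('a \<Rightarrow> 'k) set"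
  for S where
  zero: "(\<lambda>w. 0) \<in> lin_span S"
| base: "s \<in> S \<Longrightarrow> s \<in> lin_span S"
| add: "x \<in> lin_span S \<Longrightarrow> y \<in> lin_span S \<Longrightarrow> (\<lambda>w. x w + y w) \<in> lin_span S"
| smult: "x \<in> lin_span S \<Longrightarrow> (\<lambda>w. c * x w) \<in> lin_span S"

text \<open>Congruence modulo an ideal (equality in the quotient).\<close>

definition congr :: "('a \<Rightarrow> 'k::ab_group_add) set \<Rightarrow> ('a \<Rightarrow> 'k) \<Rightarrow> ('a \<Rightarrow> 'k) \<Rightarrow> bool" where
  "congr J a b \<longleftrightarrow> (\<lambda>w. a w - b w) \<in> J"

definition psign :: "nat \<Rightarrow> 'k::comm_ring_1" where
  "psign n = (-1) ^ n"

section \<open>The super vector space V and the algebra S_N(V)\<close>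

text \<open>V has homogeneous basis x_0,...,x_(d-1); par i = True iff x_i is odd.
Basis tensors of V^{\<otimes>N} are words of length N over {..<d}.\<close>

definition words :: "nat \<Rightarrow> nat \<Rightarrow> nat list set" where
  "words d N = {u. length u = N \<and> set u \<subseteq> {..<d}}"

text \<open>Signed permutation action c_sigma on a basis tensor u (positions 0..N-1):
c_sigma(v_0 \<otimes> ... \<otimes> v_(N-1)) = (sign) v_(sigma^-1 0) \<otimes> ... \<otimes> v_(sigma^-1 (N-1)),
sign = (-1)^(sum over inversions (i,j) of sigma of par(u_i) par(u_j)).\<close>

definition inv_sign :: "(nat \<Rightarrow> bool) \<Rightarrow> nat \<Rightarrow> (nat \<Rightarrow> nat) \<Rightarrow> nat list \<Rightarrow> nat" where
  "inv_sign par N \<sigma> u =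
     card {(i,j). i < j \<and> j < N \<and> \<sigma> j < \<sigma> i \<and> par (u ! i) \<and> par (u ! j)}"

definition cperm :: "(nat \<Rightarrow> bool) \<Rightarrow> nat \<Rightarrow> (nat \<Rightarrow> nat) \<Rightarrow> nat list \<Rightarrow> (nat,'k::comm_ring_1) fa" where
  "cperm par N \<sigma> u =
     fa_smult (psign (inv_sign par N \<sigma> u)) (mono (map (\<lambda>m. u ! inv \<sigma> m) [0..<N]))"

text \<open>c_{Y_N}(u) with Y_N = (1/N!) sum sgn(sigma) sigma.\<close>

definition cY :: "(nat \<Rightarrow> bool) \<Rightarrow> nat \<Rightarrow> nat list \<Rightarrow> (nat,'k::field) fa" where
  "cY par N u = (\<lambda>w. (\<Sum>\<sigma>\<in>{\<sigma>. \<sigma> permutes {..<N}}.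
                        of_int (sign \<sigma>) * cperm par N \<sigma> u w) / of_nat (fact N))"

text \<open>R = c_{Y_N}(V^{\<otimes>N}) \<subseteq> V^{\<otimes>N}; S_N(V) = T(V)/(R).\<close>

definition Rsp :: "(nat \<Rightarrow> bool) \<Rightarrow> nat \<Rightarrow> nat \<Rightarrow> (nat,'k::field) fa set" where
  "Rsp par d N = lin_span {cY par N u | u. u \<in> words d N}"

text \<open>R^perp \<subseteq> (V^*)^{\<otimes>N} for the pairing
<x^(w_0) \<otimes> ... \<otimes> x^(w_(N-1)), x_(u_(N-1)) \<otimes> ... \<otimes> x_(u_0)> = prod delta(w_i,u_i),
i.e. <f, r> = sum_u f(rev u) r(u).\<close>

definition Rperp :: "(nat \<Rightarrow> bool) \<Rightarrow> nat \<Rightarrow> nat \<Rightarrow> (nat,'k::field) fa set" where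
  "Rperp par d N = {f. (\<forall>w. w \<notin> words d N \<longrightarrow> f w = 0) \<and>
      (\<forall>r\<in>Rsp par d N. (\<Sum>u\<in>words d N. f (rev u) * r u) = 0)}"

section \<open>end S_N(V) and O(E(V)) as quotients of the free algebra on z^i_j\<close>

text \<open>Generators (i,j) with i,j < d stand for z^i_j (resp. x^i_j); parity par i xor par j.\<close>

definition gpar :: "(nat \<Rightarrow> bool) \<Rightarrow> nat \<times> nat \<Rightarrow> bool" where
  "gpar par g = (par (fst g) \<noteq> par (snd g))"

definition wpar :: "(nat \<Rightarrow> bool) \<Rightarrow> (nat \<times> nat) list \<Rightarrow> bool" where
  "wpar par w = odd (length (filter (gpar par) w))"

text \<open>c_{pi_N}(f \<otimes> r), extended bilinearly from basis tensors:
(x^(w_0) \<otimes>..\<otimes> x^(w_(N-1))) \<otimes> (x_(u_0) \<otimes>..\<otimes> x_(u_(N-1))) \<mapsto>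
(-1)^(sum_{i<j} par(u_i) par(w_j)) z^(w_0)_(u_0) ... z^(w_(N-1))_(u_(N-1)).\<close>

definition pi_sign :: "(nat \<Rightarrow> bool) \<Rightarrow> nat \<Rightarrow> nat list \<Rightarrow> nat list \<Rightarrow> nat" where
  "pi_sign par N w u = card {(i,j). i < j \<and> j < N \<and> par (u ! i) \<and> par (w ! j)}"

definition cpi :: "(nat \<Rightarrow> bool) \<Rightarrow> nat \<Rightarrow> nat \<Rightarrow> (nat,'k::field) fa \<Rightarrow> (nat,'k) fa
    \<Rightarrow> (nat \<times> nat,'k) fa" where
  "cpi par d N f r = (\<lambda>t. \<Sum>w\<in>words d N. \<Sum>u\<in>words d N.
       if t = zip w u then f w * r u * psign (pi_sign par N w u) else 0)"

definition end_ideal :: "(nat \<Rightarrow> bool) \<Rightarrow> nat \<Rightarrow> nat \<Rightarrow> (nat \<times> nat,'k::field) fa set" where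
  "end_ideal par d N = gen_ideal {cpi par d N f r | f r. f \<in> Rperp par d N \<and> r \<in> Rsp par d N}"

definition Zalg :: "nat \<Rightarrow> (nat \<times> nat,'k::zero) fa set" where
  "Zalg d = {a. fin a \<and> (\<forall>w. a w \<noteq> 0 \<longrightarrow> set w \<subseteq> {..<d} \<times> {..<d})}"

text \<open>O(E(V)): free supercommutative algebra on x^i_j, i.e. free algebra modulo
the ideal generated by supercommutators and squares of odd generators.\<close>

definition supercomm_ideal :: "(nat \<Rightarrow> bool) \<Rightarrow> nat \<Rightarrow> (nat \<times> nat,'k::field) fa set" where
  "supercomm_ideal par d = gen_ideal
     ({(\<lambda>w. fa_mul (gen a) (gen b) w
            - (if gpar par a \<and> gpar par b then -1 else 1) * fa_mul (gen b) (gen a) w)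
        | a b. a \<in> {..<d} \<times> {..<d} \<and> b \<in> {..<d} \<times> {..<d}}
      \<union> {fa_mul (gen a) (gen a) | a. a \<in> {..<d} \<times> {..<d} \<and> gpar par a})"

definition supp :: "('a \<Rightarrow> 'k::zero) \<Rightarrow> 'a set" where
  "supp a = {w. a w \<noteq> 0}"

text \<open>epsilon(z^i_j) = delta_ij, extended multiplicatively and linearly.\<close>

definition eps :: "(nat \<times> nat,'k::comm_ring_1) fa \<Rightarrow> 'k" where
  "eps a = (\<Sum>w\<in>supp a. a w * (\<Prod>g\<leftarrow>w. if fst g = snd g then 1 else 0))"

text \<open>Elements of A \<otimes> A for free algebras A: finitely supported functions on pairs
of words. Super tensor product multiplication (a\<otimes>b)(c\<otimes>d) = (-1)^(|b||c|) ac \<otimes> bd.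
Delta(z^i_j) = sum_k z^i_k \<otimes> z^k_j, extended to an algebra map into the super
tensor square; on a monomial z^(i_1)_(j_1) ... z^(i_n)_(j_n) this gives
sum over k_1..k_n of (-1)^(sum_{a<b} |z^(k_a)_(j_a)| |z^(i_b)_(k_b)|)
(z^(i_1)_(k_1)...z^(i_n)_(k_n)) \<otimes> (z^(k_1)_(j_1)...z^(k_n)_(j_n)).\<close>

definition delta_sign :: "(nat \<Rightarrow> bool) \<Rightarrow> (nat \<times> nat) list \<Rightarrow> nat list \<Rightarrow> nat" where
  "delta_sign par w ks = card {(a,b). a < b \<and> b < length w \<and>
      gpar par (ks ! a, snd (w ! a)) \<and> gpar par (fst (w ! b), ks ! b)}"

definition delta_mono :: "(nat \<Rightarrow> bool) \<Rightarrow> nat \<Rightarrow> (nat \<times> nat) list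
    \<Rightarrow> ((nat \<times> nat) list \<times> (nat \<times> nat) list \<Rightarrow> 'k::comm_ring_1)" where
  "delta_mono par d w = (\<lambda>p. \<Sum>ks\<in>words d (length w).
      if p = (zip (map fst w) ks, zip ks (map snd w))
      then psign (delta_sign par w ks) else 0)"

definition Delta :: "(nat \<Rightarrow> bool) \<Rightarrow> nat \<Rightarrow> (nat \<times> nat,'k::comm_ring_1) fa
    \<Rightarrow> ((nat \<times> nat) list \<times> (nat \<times> nat) list \<Rightarrow> 'k)" where
  "Delta par d a = (\<lambda>p. \<Sum>w\<in>supp a. a w * delta_mono par d w p)"

text \<open>phi \<otimes> phi applied to an element of the tensor square (phi given on representatives).\<close>

definition tens_map :: "(('g,'k) fa \<Rightarrow> ('g,'k) fa)
    \<Rightarrow> ('g list \<times> 'g list \<Rightarrow> 'k::comm_ring_1) \<Rightarrow> ('g list \<times> 'g list \<Rightarrow> 'k)" where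
  "tens_map \<phi> T = (\<lambda>(w1,w2). \<Sum>p\<in>supp T. T p * \<phi> (mono (fst p)) w1 * \<phi> (mono (snd p)) w2)"

definition tens :: "('g,'k::comm_ring_1) fa \<Rightarrow> ('g,'k) fa \<Rightarrow> ('g list \<times> 'g list \<Rightarrow> 'k)" where
  "tens a b = (\<lambda>(w1,w2). a w1 * b w2)"

text \<open>Kernel of (A/J) \<otimes> (A/J) <- A \<otimes> A:  J \<otimes> A + A \<otimes> J.\<close>

definition tens_ideal :: "('g,'k::comm_ring_1) fa set \<Rightarrow> ('g list \<times> 'g list \<Rightarrow> 'k) set" where
  "tens_ideal J = lin_span ({tens a b | a b. a \<in> J \<and> fin b} \<union> {tens a b | a b. fin a \<and> b \<in> J})"

definition homog :: "(nat \<Rightarrow> bool) \<Rightarrow> bool \<Rightarrow> (nat \<times> nat,'k::zero) fa \<Rightarrow> bool" where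
  "homog par p a \<longleftrightarrow> (\<forall>w. a w \<noteq> 0 \<longrightarrow> wpar par w = p)"

text \<open>phi is given on representatives in the free algebra on z^i_j; it induces a
map end S_N(V) = Zalg/I -> O(E(V)) = Zalg/J which is a homomorphism of
superbialgebras.\<close>

definition is_superbialg_hom :: "(nat \<Rightarrow> bool) \<Rightarrow> nat \<Rightarrow> nat
    \<Rightarrow> ((nat \<times> nat,'k::field) fa \<Rightarrow> (nat \<times> nat,'k) fa) \<Rightarrow> bool" where
  "is_superbialg_hom par d N \<phi> \<longleftrightarrow>
     (let I = end_ideal par d N; J = supercomm_ideal par d in
      (\<forall>a\<in>Zalg d. \<phi> a \<in> Zalg d) \<and>
      (\<forall>a\<in>Zalg d. \<forall>b\<in>Zalg d. congr I a b \<longrightarrow> congr J (\<phi> a) (\<phi> b)) \<and>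
      (\<forall>a\<in>Zalg d. \<forall>b\<in>Zalg d. congr J (\<phi> (\<lambda>w. a w + b w)) (\<lambda>w. \<phi> a w + \<phi> b w)) \<and>
      (\<forall>a\<in>Zalg d. \<forall>c. congr J (\<phi> (fa_smult c a)) (fa_smult c (\<phi> a))) \<and>
      (\<forall>a\<in>Zalg d. \<forall>b\<in>Zalg d. congr J (\<phi> (fa_mul a b)) (fa_mul (\<phi> a) (\<phi> b))) \<and>
      congr J (\<phi> fa_one) fa_one \<and>
      (\<forall>a\<in>Zalg d. \<forall>p. homog par p a \<longrightarrow> (\<exists>b\<in>Zalg d. homog par p b \<and> congr J (\<phi> a) b)) \<and>
      (\<forall>a\<in>Zalg d. eps (\<phi> a) = eps a) \<and>
      (\<forall>a\<in>Zalg d. congr (tens_ideal J) (Delta par d (\<phi> a)) (tens_map \<phi> (Delta par d a))))"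

text \<open>Coaction of the free algebra on V: x_j \<mapsto> sum_i x_i \<otimes> z^i_j, as the
coefficient function i \<mapsto> z^i_j.\<close>

definition coact :: "nat \<Rightarrow> nat \<Rightarrow> nat \<Rightarrow> (nat \<times> nat,'k::{zero,one}) fa" where
  "coact d j = (\<lambda>i. if i < d then gen (i,j) else (\<lambda>w. 0))"

end

theory Submission
  imports Defs "HOL-Library.Product_Lexorder"
begin



lemma mono_take_iff:
  assumes "i \<le> length w" shows "mono u (take i w) = (if take i w = u then 1 else 0)"
  by (simp add: mono_def)

lemma fa_mul_mono_left:
  fixes x :: "('g,'k::semiring_1) fa"
  shows "fa_mul (mono u) x w = (if length u \<le> length w \<and> take (length u) w = u then x (drop (length u) w) else 0)"
proof -
  have "fa_mul (mono u) x w = (\<Sum>i\<le>length w. if i = length u \<and> take (length u) w = u then x (drop i w) else 0)"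
    unfolding fa_mul_def mono_def
    by (rule sum.cong) (auto)
  also have "\<dots> = (if length u \<le> length w \<and> take (length u) w = u then x (drop (length u) w) else 0)"
    by (auto simp: sum.delta' if_distrib cong: if_cong)
  finally show ?thesis .
qed

lemma fa_mul_mono_right:
  fixes x :: "('g,'k::semiring_1) fa"
  shows "fa_mul x (mono v) w = (if length v \<le> length w \<and> drop (length w - length v) w = v then x (take (length w - length v) w) else 0)"
proof -
  have "fa_mul x (mono v) w = (\<Sum>i\<le>length w. if i = length w - length v \<and> length v \<le> length w \<and> drop (length w - length v) w = v then x (take i w) else 0)"
    unfolding fa_mul_def mono_def
    by (rule sum.cong) (auto)
  also have "\<dots> = (if length v \<le> length w \<and> drop (length w - length v) w = v then x (take (length w - length v) w) else 0)"
    by (auto simp: sum.delta' if_distrib cong: if_cong)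
  finally show ?thesis .
qed

lemma fa_mul_mono_mono: "fa_mul (mono u) (mono v) = (mono (u @ v) :: ('g,'k::semiring_1) fa)"
proof
  fix w :: "'g list"
  have e: "(w = u @ v) \<longleftrightarrow> (length u \<le> length w \<and> take (length u) w = u \<and> drop (length u) w = v)"
    by (metis append_eq_conv_conj append_take_drop_id le_add1 length_append)
  show "fa_mul (mono u) (mono v) w = (mono (u @ v) :: ('g,'k) fa) w"
    unfolding fa_mul_mono_left unfolding mono_def e by simp
qed

lemma fin_mono: "fin (mono u :: ('g,'k::zero_neq_one) fa)"
  unfolding fin_def mono_def by (rule finite_subset[of _ "{u}"]) auto

lemma gen_mono: "gen a = mono [a]" by (simp add: gen_def)

lemma gi_diff:
  fixes S :: "('g,'k::comm_ring_1) fa set"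
  assumes "x \<in> gen_ideal S" "y \<in> gen_ideal S"
  shows "(\<lambda>w. x w - y w) \<in> gen_ideal S"
proof -
  have "fa_smult (-1) y \<in> gen_ideal S" using assms(2) by (rule gen_ideal.smult)
  hence "(\<lambda>w. x w + fa_smult (-1) y w) \<in> gen_ideal S" using assms(1) by (intro gen_ideal.add)
  thus ?thesis by (simp add: fa_smult_def)
qed

lemma congr_refl: "congr (gen_ideal S) a a"
  unfolding congr_def using gen_ideal.zero by simp

lemma congr_sym: "congr (gen_ideal S) a b \<Longrightarrow> congr (gen_ideal S) b a"
proof -
  assume "congr (gen_ideal S) a b"
  then have "(\<lambda>w. 0 - (a w - b w)) \<in> gen_ideal S"
    unfolding congr_def by (rule gi_diff[OF gen_ideal.zero])
  moreover have "(\<lambda>w. 0 - (a w - b w)) = (\<lambda>w. b w - a w)" by simp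
  ultimately show ?thesis unfolding congr_def by simp
qed

lemma congr_trans: "congr (gen_ideal S) a b \<Longrightarrow> congr (gen_ideal S) b c \<Longrightarrow> congr (gen_ideal S) a c"
proof -
  assume "congr (gen_ideal S) a b" "congr (gen_ideal S) b c"
  then have "(\<lambda>w. (a w - b w) + (b w - c w)) \<in> gen_ideal S"
    unfolding congr_def by (rule gen_ideal.add)
  moreover have "(\<lambda>w. (a w - b w) + (b w - c w)) = (\<lambda>w. a w - c w)" by simp
  ultimately show ?thesis unfolding congr_def by simp
qed

lemma congr_smult: "congr (gen_ideal S) a b \<Longrightarrow> congr (gen_ideal S) (fa_smult c a) (fa_smult c b)"
proof -
  assume "congr (gen_ideal S) a b"
  then have "fa_smult c (\<lambda>w. a w - b w) \<in> gen_ideal S"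
    unfolding congr_def by (rule gen_ideal.smult)
  moreover have "fa_smult c (\<lambda>w. a w - b w) = (\<lambda>w. fa_smult c a w - fa_smult c b w)"
    by (simp add: fa_smult_def right_diff_distrib)
  ultimately show ?thesis unfolding congr_def by simp
qed

lemma fa_mul_diff_right: fixes a :: "('g,'k::comm_ring_1) fa" shows "fa_mul m (\<lambda>w. a w - b w) = (\<lambda>w. fa_mul m a w - fa_mul m b w)"
  unfolding fa_mul_def by (rule ext) (simp add: right_diff_distrib sum_subtractf)

lemma fa_mul_diff_left: fixes a :: "('g,'k::comm_ring_1) fa" shows "fa_mul (\<lambda>w. a w - b w) m = (\<lambda>w. fa_mul a m w - fa_mul b m w)"
  unfolding fa_mul_def by (rule ext) (simp add: left_diff_distrib sum_subtractf)

lemma congr_lmul: "fin m \<Longrightarrow> congr (gen_ideal S) a b \<Longrightarrow> congr (gen_ideal S) (fa_mul m a) (fa_mul m b)"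
  unfolding congr_def using gen_ideal.lmul[of "\<lambda>w. a w - b w" S m] by (simp add: fa_mul_diff_right)

lemma congr_rmul: "fin m \<Longrightarrow> congr (gen_ideal S) a b \<Longrightarrow> congr (gen_ideal S) (fa_mul a m) (fa_mul b m)"
  unfolding congr_def using gen_ideal.rmul[of "\<lambda>w. a w - b w" S m] by (simp add: fa_mul_diff_left)

lemma congr_add: "congr (gen_ideal S) a b \<Longrightarrow> congr (gen_ideal S) c e \<Longrightarrow>
   congr (gen_ideal S) (\<lambda>w. a w + c w) (\<lambda>w. b w + e w)"
  unfolding congr_def using gen_ideal.add[of "\<lambda>w. a w - b w" S "\<lambda>w. c w - e w"]
  by (simp add: algebra_simps)

lemma congr_sum:
  assumes "finite A" "\<And>x. x \<in> A \<Longrightarrow> congr (gen_ideal S) (F x) (G x)"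
  shows "congr (gen_ideal S) (\<lambda>w. \<Sum>x\<in>A. F x w) (\<lambda>w. \<Sum>x\<in>A. G x w)"
  using assms
proof (induction A rule: finite_induct)
  case empty then show ?case using congr_refl by simp
next
  case (insert x A)
  then show ?case using congr_add[of S "F x" "G x" "\<lambda>w. \<Sum>x\<in>A. F x w" "\<lambda>w. \<Sum>x\<in>A. G x w"]
    by simp
qed

lemma congr_zero_iff: "congr J a (\<lambda>w. 0) \<longleftrightarrow> a \<in> J"
  unfolding congr_def by simp

lemma congr_both_in: "a \<in> gen_ideal S \<Longrightarrow> b \<in> gen_ideal S \<Longrightarrow> congr (gen_ideal S) a b"
  unfolding congr_def by (rule gi_diff)

lemma gen_ideal_mono:
  assumes "S \<subseteq> gen_ideal T" shows "gen_ideal S \<subseteq> gen_ideal T"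
proof
  fix x assume "x \<in> gen_ideal S"
  then show "x \<in> gen_ideal T"
    by induction (use assms in \<open>auto intro: gen_ideal.intros\<close>)
qed




lemma fa_smult_smult: fixes a :: "('g,'k::comm_ring_1) fa" shows "fa_smult c (fa_smult c' a) = fa_smult (c * c') a"
  by (simp add: fa_smult_def mult.assoc)

lemma fa_mul_smult_right: fixes a :: "('g,'k::comm_ring_1) fa" shows "fa_mul m (fa_smult c a) = fa_smult c (fa_mul m a)"
  unfolding fa_mul_def fa_smult_def by (rule ext) (simp add: sum_distrib_left algebra_simps)

lemma fa_mul_smult_left: fixes a :: "('g,'k::comm_ring_1) fa" shows "fa_mul (fa_smult c a) m = fa_smult c (fa_mul a m)"
  unfolding fa_mul_def fa_smult_def by (rule ext) (simp add: sum_distrib_left algebra_simps)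

lemma psign_add: "psign (a + b) = (psign a * psign b :: 'k::comm_ring_1)"
  by (simp add: psign_def power_add)

lemma psign_sq: "psign a * psign a = (1 :: 'k::comm_ring_1)"
  by (simp add: psign_def power_add[symmetric])

lemma psign_even: "even (a + b) \<Longrightarrow> psign a = (psign b :: 'k::comm_ring_1)"
proof -
  assume "even (a + b)"
  then have "psign (a + b) = (1::'k)" by (simp add: psign_def)
  then have "psign a * psign b = (1::'k)" by (simp add: psign_add)
  then have "psign a * psign b * psign b = (psign b::'k)" by simp
  then show ?thesis by (simp add: mult.assoc psign_sq)
qed

lemma psign_Suc: "psign (Suc n) = - (psign n :: 'k::comm_ring_1)"
  by (simp add: psign_def)

lemma fa_smult_one[simp]: fixes a :: "('g,'k::comm_ring_1) fa" shows "fa_smult 1 a = a" by (simp add: fa_smult_def)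

context
  fixes par :: "nat \<Rightarrow> bool" and d :: nat
begin

abbreviation "GG \<equiv> {..<d} \<times> {..<d}"
abbreviation JJ :: "(nat \<times> nat, 'k::field) fa set" where "JJ \<equiv> supercomm_ideal par d"

lemma sc_gens_swap:
  assumes "a \<in> GG" "b \<in> GG"
  shows "(\<lambda>w. mono [a,b] w - (if gpar par a \<and> gpar par b then -1 else 1) * mono [b,a] w) \<in> (JJ :: (nat \<times> nat, 'k::field) fa set)"
proof -
  have "(\<lambda>w. fa_mul (gen a) (gen b) w - (if gpar par a \<and> gpar par b then -1 else 1) * fa_mul (gen b) (gen a) w) \<in> (JJ :: (nat \<times> nat, 'k) fa set)"
    unfolding supercomm_ideal_def using assms by (intro gen_ideal.base) blast
  then show ?thesis by (simp add: gen_mono fa_mul_mono_mono)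
qed

lemma sc_gens_sq:
  assumes "a \<in> GG" "gpar par a"
  shows "mono [a,a] \<in> (JJ :: (nat \<times> nat, 'k::field) fa set)"
proof -
  have "fa_mul (gen a) (gen a) \<in> (JJ :: (nat \<times> nat, 'k) fa set)"
    unfolding supercomm_ideal_def using assms by (intro gen_ideal.base) blast
  then show ?thesis by (simp add: gen_mono fa_mul_mono_mono)
qed

lemma swap_congr:
  assumes "a \<in> GG" "b \<in> GG"
  shows "congr (JJ :: (nat \<times> nat, 'k::field) fa set) (mono (a#b#ys))
           (fa_smult (if gpar par a \<and> gpar par b then -1 else 1) (mono (b#a#ys)))"
proof -
  let ?s = "(if gpar par a \<and> gpar par b then -1 else 1) :: 'k"
  have "fa_mul (\<lambda>w. mono [a,b] w - ?s * mono [b,a] w) (mono ys) \<in> (JJ :: (nat \<times> nat, 'k) fa set)"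
    unfolding supercomm_ideal_def
    by (rule gen_ideal.rmul[OF sc_gens_swap[OF assms, unfolded supercomm_ideal_def] fin_mono])
  moreover have "(\<lambda>w. mono [a,b] w - ?s * mono [b,a] w) = (\<lambda>w. mono [a,b] w - fa_smult ?s (mono [b,a]) w)"
    by (simp add: fa_smult_def)
  ultimately show ?thesis
    unfolding congr_def by (simp add: fa_mul_diff_left fa_mul_smult_left fa_mul_mono_mono)
qed

lemma sq_in:
  assumes "a \<in> GG" "gpar par a"
  shows "mono (ys @ a # a # zs) \<in> (JJ :: (nat \<times> nat, 'k::field) fa set)"
proof -
  have "fa_mul (mono ys) (fa_mul (mono [a,a]) (mono zs)) \<in> (JJ :: (nat \<times> nat, 'k) fa set)"
    unfolding supercomm_ideal_def
    by (rule gen_ideal.lmul[OF gen_ideal.rmul[OF sc_gens_sq[OF assms, unfolded supercomm_ideal_def] fin_mono] fin_mono])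
  then show ?thesis by (simp add: fa_mul_mono_mono)
qed

fun sc :: "(nat \<times> nat) list \<Rightarrow> nat" where
  "sc [] = 0"
| "sc (g # t) = length (filter (\<lambda>h. h < g \<and> gpar par g \<and> gpar par h) t) + sc t"

lemma ins_congr:
  assumes "sorted xs" "set xs \<subseteq> GG" "g \<in> GG"
  shows "congr (JJ :: (nat \<times> nat, 'k::field) fa set) (mono (g # xs))
     (fa_smult (psign (length (filter (\<lambda>h. h < g \<and> gpar par g \<and> gpar par h) xs))) (mono (insort g xs)))"
  using assms
proof (induction xs)
  case Nil
  then show ?case by (simp add: psign_def congr_refl[unfolded supercomm_ideal_def] supercomm_ideal_def)
next
  case (Cons x xs)
  show ?case
  proof (cases "g \<le> x")
    case True
    have "filter (\<lambda>h. h < g \<and> gpar par g \<and> gpar par h) (x # xs) = []"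
    proof -
      have "\<forall>h\<in>set (x#xs). g \<le> h" using Cons.prems(1) True by (metis order_trans set_ConsD sorted_simps(2))
      then show ?thesis by (intro filter_False) (meson leD)
    qed
    then show ?thesis using True
      by (simp add: psign_def congr_refl[unfolded supercomm_ideal_def] supercomm_ideal_def)
  next
    case False
    let ?P = "\<lambda>h. h < g \<and> gpar par g \<and> gpar par h"
    let ?s = "(if gpar par g \<and> gpar par x then -1 else 1) :: 'k"
    have xG: "x \<in> GG" using Cons.prems by auto
    have IH: "congr (JJ :: (nat \<times> nat, 'k) fa set) (mono (g # xs))
       (fa_smult (psign (length (filter ?P xs))) (mono (insort g xs)))"
      using Cons by auto
    have 1: "congr (JJ :: (nat \<times> nat, 'k) fa set) (mono (g # x # xs)) (fa_smult ?s (mono (x # g # xs)))"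
      using swap_congr[OF Cons.prems(3) xG] .
    have 2: "congr (JJ :: (nat \<times> nat, 'k) fa set) (mono (x # g # xs))
       (fa_smult (psign (length (filter ?P xs))) (mono (x # insort g xs)))"
      using congr_lmul[OF fin_mono[of "[x]"] IH[unfolded supercomm_ideal_def]]
      by (simp add: fa_mul_mono_mono fa_mul_smult_right supercomm_ideal_def)
    have 3: "?s * psign (length (filter ?P xs)) = psign (length (filter ?P (x # xs)))"
      using False by (simp add: psign_def not_le)
    show ?thesis
      using congr_trans[OF 1[unfolded supercomm_ideal_def] congr_smult[OF 2[unfolded supercomm_ideal_def], of ?s]] False 3
      by (simp add: fa_smult_smult supercomm_ideal_def)
  qed
qed

lemma filter_sort_len: "length (filter P (sort t)) = length (filter P t)"
  by (metis mset_filter mset_sort size_mset)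

lemma sort_congr:
  assumes "set t \<subseteq> GG"
  shows "congr (JJ :: (nat \<times> nat, 'k::field) fa set) (mono t) (fa_smult (psign (sc t)) (mono (sort t)))"
  using assms
proof (induction t)
  case Nil
  then show ?case by (simp add: psign_def congr_refl[unfolded supercomm_ideal_def] supercomm_ideal_def)
next
  case (Cons g t)
  let ?P = "\<lambda>h. h < g \<and> gpar par g \<and> gpar par h"
  have IH: "congr (JJ :: (nat \<times> nat, 'k) fa set) (mono t) (fa_smult (psign (sc t)) (mono (sort t)))"
    using Cons by auto
  have 1: "congr (JJ :: (nat \<times> nat, 'k) fa set) (mono (g # t)) (fa_smult (psign (sc t)) (mono (g # sort t)))"
    using congr_lmul[OF fin_mono[of "[g]"] IH[unfolded supercomm_ideal_def]]
    by (simp add: fa_mul_mono_mono fa_mul_smult_right supercomm_ideal_def)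
  have 2: "congr (JJ :: (nat \<times> nat, 'k) fa set) (mono (g # sort t))
     (fa_smult (psign (length (filter ?P t))) (mono (insort g (sort t))))"
    using ins_congr[of "sort t" g] Cons.prems by (simp add: filter_sort_len)
  show ?case
    using congr_trans[OF 1[unfolded supercomm_ideal_def] congr_smult[OF 2[unfolded supercomm_ideal_def], of "psign (sc t)"]]
    by (simp add: fa_smult_smult supercomm_ideal_def psign_add mult.commute)
qed

lemma sorted_dup:
  assumes "sorted xs" "count (mset xs) a \<ge> 2"
  shows "\<exists>ys zs. xs = ys @ a # a # zs"
  using assms
proof (induction xs)
  case Nil then show ?case by simp
next
  case (Cons x xs)
  show ?case
  proof (cases "x = a")
    case True
    then have "count (mset xs) a \<noteq> 0" using Cons.prems by simp
    then have "a \<in> set xs" by simp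
    then obtain y ys where xs: "xs = y # ys" by (cases xs) auto
    have "x \<le> y" using Cons.prems xs by simp
    moreover have "y \<le> a" using Cons.prems xs \<open>a \<in> set xs\<close> by auto
    ultimately have "y = a" using True by simp
    then show ?thesis using True xs by (metis append_Nil)
  next
    case False
    then obtain ys zs where "xs = ys @ a # a # zs" using Cons by auto
    then show ?thesis by (metis append_Cons)
  qed
qed

lemma dup_in:
  assumes "set t \<subseteq> GG" "gpar par a" "count (mset t) a \<ge> 2"
  shows "mono t \<in> (JJ :: (nat \<times> nat, 'k::field) fa set)"
proof -
  obtain ys zs where e: "sort t = ys @ a # a # zs"
    using sorted_dup[of "sort t" a] assms by auto
  have "count (mset t) a \<noteq> 0" using assms(3) by linarith
  then have "a \<in> set t" by simp
  then have aG: "a \<in> GG" using assms(1) by auto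
  have "mono (sort t) \<in> (JJ :: (nat \<times> nat, 'k) fa set)" unfolding e by (rule sq_in[OF aG assms(2)])
  then have "fa_smult (psign (sc t)) (mono (sort t)) \<in> (JJ :: (nat \<times> nat, 'k) fa set)"
    unfolding supercomm_ideal_def by (rule gen_ideal.smult)
  moreover have "congr (JJ :: (nat \<times> nat, 'k) fa set) (mono t) (fa_smult (psign (sc t)) (mono (sort t)))"
    using sort_congr assms by blast
  ultimately have "(\<lambda>w. (mono t w - fa_smult (psign (sc t)) (mono (sort t)) w) + fa_smult (psign (sc t)) (mono (sort t)) w) \<in> (JJ :: (nat \<times> nat, 'k) fa set)"
    unfolding congr_def supercomm_ideal_def by (intro gen_ideal.add)
  then show ?thesis by simp
qed

end



definition Pm :: "nat \<Rightarrow> (nat \<Rightarrow> nat) \<Rightarrow> 'a list \<Rightarrow> 'a list" where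
  "Pm N \<sigma> t = map (\<lambda>m. t ! inv \<sigma> m) [0..<N]"

definition invs :: "('a \<Rightarrow> bool) \<Rightarrow> nat \<Rightarrow> (nat \<Rightarrow> nat) \<Rightarrow> 'a list \<Rightarrow> nat" where
  "invs Q N \<sigma> t = card {(i,j). i < j \<and> j < N \<and> \<sigma> j < \<sigma> i \<and> Q (t ! i) \<and> Q (t ! j)}"

definition DD :: "nat \<Rightarrow> (nat \<times> nat) set" where "DD N = {(i,j). i < j \<and> j < N}"

lemma finite_DD: "finite (DD N)"
  unfolding DD_def by (rule finite_subset[of _ "{..<N} \<times> {..<N}"]) auto

lemma card_DD: "card {(i,j). i < j \<and> j < N \<and> Q i j} = (\<Sum>p\<in>DD N. if Q (fst p) (snd p) then 1 else 0)"
proof -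
  have "{(i,j). i < j \<and> j < N \<and> Q i j} = {p \<in> DD N. Q (fst p) (snd p)}"
    unfolding DD_def by auto
  moreover have "card {p \<in> DD N. Q (fst p) (snd p)} = (\<Sum>p\<in>{p \<in> DD N. Q (fst p) (snd p)}. 1::nat)"
    by simp
  moreover have "\<dots> = (\<Sum>p\<in>DD N. if Q (fst p) (snd p) then 1 else 0)"
    by (rule sum.inter_filter[OF finite_DD])
  ultimately show ?thesis by simp
qed

lemma finite_pairs: "finite {(i,j). i < j \<and> j < (N::nat) \<and> Q i j}"
  by (rule finite_subset[OF _ finite_DD[of N]]) (auto simp: DD_def)

lemma card_reindex:
  assumes p: "\<sigma> permutes {..<N}"
  shows "card {(k,l). k < l \<and> l < N \<and> Q (inv \<sigma> k) (inv \<sigma> l)} =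
     (\<Sum>p\<in>DD N. (if \<sigma> (fst p) < \<sigma> (snd p) \<and> Q (fst p) (snd p) then 1 else 0)
               + (if \<sigma> (snd p) < \<sigma> (fst p) \<and> Q (snd p) (fst p) then 1 else 0))"
proof -
  let ?L = "{(k,l). k < l \<and> l < N \<and> Q (inv \<sigma> k) (inv \<sigma> l)}"
  let ?E1 = "{(i,j). i < j \<and> j < N \<and> \<sigma> i < \<sigma> j \<and> Q i j}"
  let ?E2 = "{(i,j). i < j \<and> j < N \<and> \<sigma> j < \<sigma> i \<and> Q j i}"
  let ?f1 = "\<lambda>(i,j). (\<sigma> i, \<sigma> j)"
  let ?f2 = "\<lambda>(i,j). (\<sigma> j, \<sigma> i)"
  have inj: "inj \<sigma>" using permutes_inj[OF p] .
  have sinv: "\<sigma> (inv \<sigma> x) = x" for x using permutes_inverses(1)[OF p] .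
  have invs: "inv \<sigma> (\<sigma> x) = x" for x using permutes_inverses(2)[OF p] .
  have inN: "x < N \<longleftrightarrow> \<sigma> x < N" for x using permutes_in_image[OF p, of x] by simp
  have inN': "x < N \<longleftrightarrow> inv \<sigma> x < N" for x using permutes_in_image[OF permutes_inv[OF p], of x] by simp
  have "?L = ?f1 ` ?E1 \<union> ?f2 ` ?E2"
  proof (rule set_eqI)
    fix q :: "nat \<times> nat"
    obtain k l where q: "q = (k,l)" by (cases q)
    show "q \<in> ?L \<longleftrightarrow> q \<in> ?f1 ` ?E1 \<union> ?f2 ` ?E2"
    proof
      assume "q \<in> ?L"
      then have kl: "k < l" "l < N" "Q (inv \<sigma> k) (inv \<sigma> l)" using q by auto
      have ne: "inv \<sigma> k \<noteq> inv \<sigma> l" using kl(1) by (metis less_irrefl sinv)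
      show "q \<in> ?f1 ` ?E1 \<union> ?f2 ` ?E2"
      proof (cases "inv \<sigma> k < inv \<sigma> l")
        case True
        have "(inv \<sigma> k, inv \<sigma> l) \<in> ?E1" using True kl sinv[of k] sinv[of l] inN'[of l] by simp
        then have "?f1 (inv \<sigma> k, inv \<sigma> l) \<in> ?f1 ` ?E1" by (rule imageI)
        then show ?thesis using q sinv[of k] sinv[of l] by simp
      next
        case False
        then have lt: "inv \<sigma> l < inv \<sigma> k" using ne by auto
        have "inv \<sigma> k < N" using inN'[of k] kl by simp
        then have "(inv \<sigma> l, inv \<sigma> k) \<in> ?E2" using lt kl sinv[of k] sinv[of l] by simp
        then have "?f2 (inv \<sigma> l, inv \<sigma> k) \<in> ?f2 ` ?E2" by (rule imageI)
        then show ?thesis using q sinv[of k] sinv[of l] by simp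
      qed
    next
      assume "q \<in> ?f1 ` ?E1 \<union> ?f2 ` ?E2"
      then show "q \<in> ?L"
      proof
        assume "q \<in> ?f1 ` ?E1"
        then obtain i j where "i < j" "j < N" "\<sigma> i < \<sigma> j" "Q i j" "q = (\<sigma> i, \<sigma> j)" by auto
        then show ?thesis using invs[of i] invs[of j] inN[of j] by simp
      next
        assume "q \<in> ?f2 ` ?E2"
        then obtain i j where "i < j" "j < N" "\<sigma> j < \<sigma> i" "Q j i" "q = (\<sigma> j, \<sigma> i)" by auto
        moreover have "i < N" using \<open>i < j\<close> \<open>j < N\<close> by simp
        ultimately show ?thesis using invs[of i] invs[of j] inN[of i] by simp
      qed
    qed
  qed
  moreover have "?f1 ` ?E1 \<inter> ?f2 ` ?E2 = {}"
  proof (rule ccontr)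
    assume "?f1 ` ?E1 \<inter> ?f2 ` ?E2 \<noteq> {}"
    then obtain i j i' j' where a: "(i,j) \<in> ?E1" "(i',j') \<in> ?E2" "(\<sigma> i, \<sigma> j) = (\<sigma> j', \<sigma> i')" by auto
    then have "i = j'" "j = i'" by (simp_all add: inj_eq[OF inj])
    then show False using a(1,2) by auto
  qed
  moreover have "inj_on ?f1 ?E1" by (auto simp: inj_on_def inj_eq[OF inj])
  moreover have "inj_on ?f2 ?E2" by (auto simp: inj_on_def inj_eq[OF inj])
  ultimately have "card ?L = card ?E1 + card ?E2"
    by (simp add: card_Un_disjoint finite_pairs card_image)
  also have "\<dots> = (\<Sum>p\<in>DD N. (if \<sigma> (fst p) < \<sigma> (snd p) \<and> Q (fst p) (snd p) then 1 else 0))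
      + (\<Sum>p\<in>DD N. (if \<sigma> (snd p) < \<sigma> (fst p) \<and> Q (snd p) (fst p) then 1 else 0))"
    by (simp add: card_DD)
  finally show ?thesis by (simp add: sum.distrib)
qed

lemma card_pairs_Suc:
  "card {(i,j). i < j \<and> j < Suc n \<and> Q i j} = card {j. j < n \<and> Q 0 (Suc j)} + card {(i,j). i < j \<and> j < n \<and> Q (Suc i) (Suc j)}"
proof -
  let ?A = "{j. j < n \<and> Q 0 (Suc j)}"
  let ?B = "{(i,j). i < j \<and> j < n \<and> Q (Suc i) (Suc j)}"
  let ?f = "\<lambda>j. (0::nat, Suc j)"
  let ?g = "\<lambda>(i,j). (Suc i, Suc j)"
  have "{(i,j). i < j \<and> j < Suc n \<and> Q i j} = ?f ` ?A \<union> ?g ` ?B"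
  proof (rule set_eqI)
    fix q :: "nat \<times> nat"
    obtain i j where q: "q = (i,j)" by (cases q)
    show "q \<in> {(i,j). i < j \<and> j < Suc n \<and> Q i j} \<longleftrightarrow> q \<in> ?f ` ?A \<union> ?g ` ?B"
    proof
      assume a: "q \<in> {(i,j). i < j \<and> j < Suc n \<and> Q i j}"
      then have h: "i < j" "j < Suc n" "Q i j" using q by auto
      then obtain j' where j': "j = Suc j'" by (cases j) auto
      show "q \<in> ?f ` ?A \<union> ?g ` ?B"
      proof (cases i)
        case 0
        then have "j' \<in> ?A" using h j' by auto
        then show ?thesis using q 0 j' by auto
      next
        case (Suc i')
        then have "(i',j') \<in> ?B" using h j' by auto
        then have "?g (i',j') \<in> ?g ` ?B" by (rule imageI)
        then show ?thesis using q Suc j' by auto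
      qed
    next
      assume "q \<in> ?f ` ?A \<union> ?g ` ?B"
      then show "q \<in> {(i,j). i < j \<and> j < Suc n \<and> Q i j}" by auto
    qed
  qed
  moreover have "?f ` ?A \<inter> ?g ` ?B = {}" by auto
  moreover have "finite ?A" by auto
  moreover have "finite ?B" by (rule finite_pairs)
  moreover have "inj_on ?f ?A" by (auto simp: inj_on_def)
  moreover have "inj_on ?g ?B" by (auto simp: inj_on_def)
  ultimately show ?thesis by (simp add: card_Un_disjoint card_image)
qed

context
  fixes par :: "nat \<Rightarrow> bool" and d :: nat
begin

lemma sc_card: "sc par t = card {(i,j). i < j \<and> j < length t \<and> t ! j < t ! i \<and> gpar par (t ! i) \<and> gpar par (t ! j)}"
proof (induction t)
  case Nil then show ?case by simp
next
  case (Cons g t)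
  have "length (filter (\<lambda>h. h < g \<and> gpar par g \<and> gpar par h) t) =
        card {j. j < length t \<and> t ! j < g \<and> gpar par g \<and> gpar par (t ! j)}"
    by (simp add: length_filter_conv_card)
  then show ?case
    using card_pairs_Suc[where Q="\<lambda>i j. (g # t) ! j < (g # t) ! i \<and> gpar par ((g # t) ! i) \<and> gpar par ((g # t) ! j)" and n="length t"]
    Cons.IH by simp
qed

lemma Pm_nth: "k < N \<Longrightarrow> Pm N \<sigma> t ! k = t ! inv \<sigma> k"
  by (simp add: Pm_def)

lemma length_Pm[simp]: "length (Pm N \<sigma> t) = N"
  by (simp add: Pm_def)

lemma Pm_permute_list: "length t = N \<Longrightarrow> Pm N \<sigma> t = permute_list (inv \<sigma>) t"
  by (simp add: Pm_def permute_list_def)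

lemma mset_Pm: "\<sigma> permutes {..<N} \<Longrightarrow> length t = N \<Longrightarrow> mset (Pm N \<sigma> t) = mset t"
  by (simp add: Pm_permute_list permutes_inv)

lemma set_Pm: "\<sigma> permutes {..<N} \<Longrightarrow> length t = N \<Longrightarrow> set (Pm N \<sigma> t) = set t"
  by (metis mset_Pm set_mset_mset)

lemma perm_sc_parity:
  assumes p: "\<sigma> permutes {..<N}" and len: "length t = N"
    and dist: "\<forall>i<N. \<forall>j<N. i \<noteq> j \<longrightarrow> gpar par (t ! i) \<longrightarrow> gpar par (t ! j) \<longrightarrow> t ! i \<noteq> t ! j"
  shows "even (sc par (Pm N \<sigma> t) + sc par t + invs (gpar par) N \<sigma> t)"
proof -
  let ?Q = "\<lambda>i j. t ! j < t ! i \<and> gpar par (t ! i) \<and> gpar par (t ! j)"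
  have "sc par (Pm N \<sigma> t) = card {(k,l). k < l \<and> l < N \<and> ?Q (inv \<sigma> k) (inv \<sigma> l)}"
    unfolding sc_card length_Pm
    by (rule arg_cong[where f=card]) (auto simp: Pm_nth)
  also have "\<dots> = (\<Sum>p\<in>DD N. (if \<sigma> (fst p) < \<sigma> (snd p) \<and> ?Q (fst p) (snd p) then 1 else 0)
               + (if \<sigma> (snd p) < \<sigma> (fst p) \<and> ?Q (snd p) (fst p) then 1 else 0))"
    by (rule card_reindex[OF p])
  finally have 1: "sc par (Pm N \<sigma> t) = \<dots>" .
  have 2: "sc par t = (\<Sum>p\<in>DD N. if ?Q (fst p) (snd p) then 1 else 0)"
    unfolding sc_card len by (rule card_DD)
  have 3: "invs (gpar par) N \<sigma> t = (\<Sum>p\<in>DD N. if \<sigma> (snd p) < \<sigma> (fst p) \<and> gpar par (t ! fst p) \<and> gpar par (t ! snd p) then 1 else 0)"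
    unfolding invs_def by (rule card_DD)
  have "even ((if \<sigma> i < \<sigma> j \<and> ?Q i j then 1 else 0) + (if \<sigma> j < \<sigma> i \<and> ?Q j i then 1 else 0)
     + (if ?Q i j then 1 else 0) + (if \<sigma> j < \<sigma> i \<and> gpar par (t ! i) \<and> gpar par (t ! j) then 1 else (0::nat)))"
    if "(i,j) \<in> DD N" for i j
  proof -
    have ij: "i < j" "j < N" using that by (auto simp: DD_def)
    have sne: "\<sigma> i \<noteq> \<sigma> j" using permutes_inj[OF p] ij by (metis injD less_irrefl)
    show ?thesis
    proof (cases "gpar par (t ! i) \<and> gpar par (t ! j)")
      case False then show ?thesis by auto
    next
      case True
      then have tne: "t ! i \<noteq> t ! j" using dist ij by auto
      have A: "t ! j < t ! i \<longleftrightarrow> \<not> t ! i < t ! j" using tne by (meson less_asym linorder_neqE)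
      have B: "\<sigma> j < \<sigma> i \<longleftrightarrow> \<not> \<sigma> i < \<sigma> j" using sne by auto
      show ?thesis using True A B by (cases "t ! j < t ! i"; cases "\<sigma> j < \<sigma> i") auto
    qed
  qed
  then have "even (\<Sum>p\<in>DD N. (if \<sigma> (fst p) < \<sigma> (snd p) \<and> ?Q (fst p) (snd p) then 1 else 0)
               + (if \<sigma> (snd p) < \<sigma> (fst p) \<and> ?Q (snd p) (fst p) then 1 else 0)
     + (if ?Q (fst p) (snd p) then 1 else 0) + (if \<sigma> (snd p) < \<sigma> (fst p) \<and> gpar par (t ! fst p) \<and> gpar par (t ! snd p) then 1 else (0::nat)))"
    by (intro dvd_sum) auto
  then show ?thesis unfolding 1 2 3 by (simp add: sum.distrib)
qed

lemma L1:
  assumes G: "set t \<subseteq> GG d" and len: "length t = N" and p: "\<sigma> permutes {..<N}"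
  shows "congr (JJ par d :: (nat \<times> nat, 'k::field) fa set) (mono (Pm N \<sigma> t))
           (fa_smult (psign (invs (gpar par) N \<sigma> t)) (mono t))"
proof (cases "\<forall>i<N. \<forall>j<N. i \<noteq> j \<longrightarrow> gpar par (t ! i) \<longrightarrow> gpar par (t ! j) \<longrightarrow> t ! i \<noteq> t ! j")
  case True
  have ev: "even (sc par (Pm N \<sigma> t) + sc par t + invs (gpar par) N \<sigma> t)"
    by (rule perm_sc_parity[OF p len True])
  have srt: "sort (Pm N \<sigma> t) = sort t"
    by (rule properties_for_sort) (simp_all add: mset_Pm[OF p len])
  have GP: "set (Pm N \<sigma> t) \<subseteq> GG d" using set_Pm[OF p len] G by simp
  have c1: "congr (JJ par d :: (nat \<times> nat, 'k) fa set) (mono (Pm N \<sigma> t))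
      (fa_smult (psign (sc par (Pm N \<sigma> t))) (mono (sort t)))"
    using sort_congr[where par=par and d=d, OF GP] srt by simp
  have c2: "congr (JJ par d :: (nat \<times> nat, 'k) fa set) (mono t) (fa_smult (psign (sc par t)) (mono (sort t)))"
    using sort_congr[where par=par and d=d, OF G] by simp
  have c3: "congr (JJ par d :: (nat \<times> nat, 'k) fa set) (fa_smult (psign (sc par t)) (mono t)) (mono (sort t))"
    using congr_smult[OF c2[unfolded supercomm_ideal_def], of "psign (sc par t)"]
    by (simp add: fa_smult_smult psign_sq supercomm_ideal_def)
  have c4: "congr (JJ par d :: (nat \<times> nat, 'k) fa set) (mono (sort t)) (fa_smult (psign (sc par t)) (mono t))"
    using congr_sym[OF c3[unfolded supercomm_ideal_def]] by (simp add: supercomm_ideal_def)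
  have c5: "congr (JJ par d :: (nat \<times> nat, 'k) fa set) (mono (Pm N \<sigma> t))
      (fa_smult (psign (sc par (Pm N \<sigma> t)) * psign (sc par t)) (mono t))"
    using congr_trans[OF c1[unfolded supercomm_ideal_def] congr_smult[OF c4[unfolded supercomm_ideal_def]]]
    by (simp add: fa_smult_smult supercomm_ideal_def)
  have "psign (sc par (Pm N \<sigma> t)) * psign (sc par t) = (psign (invs (gpar par) N \<sigma> t) :: 'k)"
    using psign_even[OF ev] by (simp add: psign_add)
  then show ?thesis using c5 by simp
next
  case False
  then obtain i j where ij: "i < N" "j < N" "i \<noteq> j" "gpar par (t ! i)" "t ! i = t ! j" by blast
  let ?a = "t ! i"
  have "{i, j} \<subseteq> {k. k < length t \<and> ?a = t ! k}" using ij len by auto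
  then have "card {i,j} \<le> card {k. k < length t \<and> ?a = t ! k}" by (intro card_mono) auto
  then have cnt: "count (mset t) ?a \<ge> 2" using ij(3) by (simp add: count_mset count_list_eq_length_filter length_filter_conv_card)
  have in1: "mono t \<in> (JJ par d :: (nat \<times> nat, 'k) fa set)"
    by (rule dup_in[where par=par and d=d, OF G ij(4) cnt])
  have G2: "set (Pm N \<sigma> t) \<subseteq> GG d" using set_Pm[OF p len] G by simp
  have in2: "mono (Pm N \<sigma> t) \<in> (JJ par d :: (nat \<times> nat, 'k) fa set)"
    by (rule dup_in[where par=par and d=d, OF G2 ij(4)]) (simp add: mset_Pm[OF p len] cnt)
  have in3: "fa_smult (psign (invs (gpar par) N \<sigma> t)) (mono t) \<in> (JJ par d :: (nat \<times> nat, 'k) fa set)"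
    using in1 unfolding supercomm_ideal_def by (rule gen_ideal.smult)
  show ?thesis using congr_both_in in2 in3 unfolding supercomm_ideal_def by blast
qed

end



definition rho :: "nat \<Rightarrow> nat \<Rightarrow> nat" where "rho N i = (if i < N then N - 1 - i else i)"
definition cnj :: "nat \<Rightarrow> (nat \<Rightarrow> nat) \<Rightarrow> nat \<Rightarrow> nat" where "cnj N \<sigma> = rho N \<circ> \<sigma> \<circ> rho N"

lemma rho_rho[simp]: "rho N (rho N i) = i"
  by (simp add: rho_def)

lemma rho_lt: "i < N \<Longrightarrow> rho N i < N"
  by (simp add: rho_def)

lemma rho_permutes: "rho N permutes {..<N}"
  unfolding permutes_def
proof (intro conjI allI impI)
  fix x assume "x \<notin> {..<N}" then show "rho N x = x" by (simp add: rho_def)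
next
  fix y show "\<exists>!x. rho N x = y"
    by (rule ex1I[of _ "rho N y"]) (simp, metis rho_rho)
qed

lemma cnj_permutes: "\<sigma> permutes {..<N} \<Longrightarrow> cnj N \<sigma> permutes {..<N}"
  unfolding cnj_def by (intro permutes_compose rho_permutes) auto

lemma cnj_cnj: "\<sigma> permutes {..<N} \<Longrightarrow> cnj N (cnj N \<sigma>) = \<sigma>"
  unfolding cnj_def by (rule ext) simp

lemma sign_cnj: "\<sigma> permutes {..<N} \<Longrightarrow> sign (cnj N \<sigma>) = sign \<sigma>"
proof -
  assume p: "\<sigma> permutes {..<N}"
  have pr: "permutation (rho N)" using rho_permutes permutation_permutes by blast
  have ps: "permutation \<sigma>" using p permutation_permutes by blast
  have "sign (cnj N \<sigma>) = sign (rho N) * sign \<sigma> * sign (rho N)"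
    unfolding cnj_def using pr ps by (simp add: sign_compose permutation_compose)
  also have "\<dots> = sign \<sigma>" by (metis mult.commute mult.left_commute sign_idempotent mult_1_right)
  finally show ?thesis .
qed

lemma inv_cnj: assumes p: "\<sigma> permutes {..<N}" shows "inv (cnj N \<sigma>) k = rho N (inv \<sigma> (rho N k))"
proof -
  have "cnj N \<sigma> (rho N (inv \<sigma> (rho N k))) = k"
    unfolding cnj_def using permutes_inverses(1)[OF p] by simp
  then show ?thesis using permutes_inv_eq[OF cnj_permutes[OF p]] by blast
qed

lemma Pm_cnj_rev:
  assumes p: "\<sigma> permutes {..<N}" and len: "length w = N"
  shows "Pm N (cnj N \<sigma>) (rev w) = rev (Pm N \<sigma> w)"
proof (rule nth_equalityI)
  show "length (Pm N (cnj N \<sigma>) (rev w)) = length (rev (Pm N \<sigma> w))" by simp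
next
  fix k assume "k < length (Pm N (cnj N \<sigma>) (rev w))"
  then have k: "k < N" by simp
  have rk: "rho N k < N" using rho_lt[OF k] .
  have x: "inv \<sigma> (rho N k) < N" using permutes_in_image[OF permutes_inv[OF p]] rk by auto
  have "Pm N (cnj N \<sigma>) (rev w) ! k = rev w ! rho N (inv \<sigma> (rho N k))"
    using k by (simp add: Pm_nth inv_cnj[OF p])
  also have "\<dots> = w ! inv \<sigma> (rho N k)"
    using x len rho_lt[OF x] by (simp add: rev_nth rho_def)
  also have "\<dots> = rev (Pm N \<sigma> w) ! k"
    using k len by (simp add: rev_nth Pm_nth rho_def)
  finally show "Pm N (cnj N \<sigma>) (rev w) ! k = rev (Pm N \<sigma> w) ! k" .
qed

lemma Pm_zip:
  assumes p: "\<sigma> permutes {..<N}" and "length w = N" "length u = N"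
  shows "Pm N \<sigma> (zip w u) = zip (Pm N \<sigma> w) (Pm N \<sigma> u)"
proof (rule nth_equalityI)
  fix k assume "k < length (Pm N \<sigma> (zip w u))"
  then have k: "k < N" by simp
  have x: "inv \<sigma> k < N" using permutes_in_image[OF permutes_inv[OF p]] k by auto
  show "Pm N \<sigma> (zip w u) ! k = zip (Pm N \<sigma> w) (Pm N \<sigma> u) ! k"
    using k x assms by (simp add: Pm_nth)
qed simp
  



lemma rho_less_iff: "a < N \<Longrightarrow> b < N \<Longrightarrow> rho N a < rho N b \<longleftrightarrow> b < a"
  by (auto simp: rho_def)

lemma S1:
  assumes p: "\<sigma> permutes {..<N}" and len: "length w = N"
  shows "invs P N (cnj N \<sigma>) (rev w) = invs P N \<sigma> w"
proof -
  let ?A = "{(i,j). i < j \<and> j < N \<and> cnj N \<sigma> j < cnj N \<sigma> i \<and> P (rev w ! i) \<and> P (rev w ! j)}"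
  let ?B = "{(i,j). i < j \<and> j < N \<and> \<sigma> j < \<sigma> i \<and> P (w ! i) \<and> P (w ! j)}"
  let ?h = "\<lambda>(i,j). (rho N j, rho N i)"
  have inN: "x < N \<Longrightarrow> \<sigma> x < N" for x using permutes_in_image[OF p, of x] by simp
  have revn: "x < N \<Longrightarrow> rev w ! x = w ! rho N x" for x using len by (simp add: rev_nth rho_def)
  have key: "i < N \<Longrightarrow> j < N \<Longrightarrow> cnj N \<sigma> j < cnj N \<sigma> i \<longleftrightarrow> \<sigma> (rho N i) < \<sigma> (rho N j)" for i j
    unfolding cnj_def o_def using rho_less_iff[OF inN[OF rho_lt[of j]] inN[OF rho_lt[of i]]] by simp
  have "?B = ?h ` ?A"
  proof (rule set_eqI)
    fix q :: "nat \<times> nat"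
    obtain i j where q: "q = (i,j)" by (cases q)
    show "q \<in> ?B \<longleftrightarrow> q \<in> ?h ` ?A"
    proof
      assume "q \<in> ?B"
      then have h: "i < j" "j < N" "\<sigma> j < \<sigma> i" "P (w ! i)" "P (w ! j)" using q by auto
      have iN: "i < N" using h by simp
      have "(rho N j, rho N i) \<in> ?A"
        using h iN rho_lt[OF iN] rho_lt[OF h(2)] rho_less_iff[OF h(2) iN] key[OF rho_lt[OF h(2)] rho_lt[OF iN]]
          revn[OF rho_lt[OF iN]] revn[OF rho_lt[OF h(2)]] by simp
      then have "?h (rho N j, rho N i) \<in> ?h ` ?A" by (rule imageI)
      then show "q \<in> ?h ` ?A" using q by simp
    next
      assume "q \<in> ?h ` ?A"
      then obtain a b where ab: "a < b" "b < N" "cnj N \<sigma> b < cnj N \<sigma> a" "P (rev w ! a)" "P (rev w ! b)"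
        and q2: "q = (rho N b, rho N a)" by auto
      have aN: "a < N" using ab by simp
      show "q \<in> ?B"
        using ab aN q2 rho_lt[OF aN] rho_lt[OF ab(2)] rho_less_iff[OF ab(2) aN] key[OF aN ab(2)] revn[OF aN] revn[OF ab(2)]
        by simp
    qed
  qed
  moreover have "inj_on ?h ?A"
    by (auto simp: inj_on_def) (metis rho_rho)+
  ultimately show ?thesis unfolding invs_def by (simp add: card_image)
qed

definition C1 :: "(nat \<Rightarrow> bool) \<Rightarrow> nat \<Rightarrow> (nat \<Rightarrow> nat) \<Rightarrow> nat list \<Rightarrow> nat list \<Rightarrow> nat" where
  "C1 par N \<sigma> w u = card {(i,j). i < j \<and> j < N \<and> \<sigma> j < \<sigma> i \<and> par (w ! i) \<and> par (u ! j)}"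

lemma S2:
  assumes lw: "length w = N" and lu: "length u = N"
  shows "even (inv_sign par N \<sigma> u + invs (gpar par) N \<sigma> (zip w u) + invs par N \<sigma> w + C1 par N \<sigma> w u + C1 par N \<sigma> u w)"
proof -
  have z: "invs (gpar par) N \<sigma> (zip w u) = card {(i,j). i < j \<and> j < N \<and> \<sigma> j < \<sigma> i \<and> (par (w ! i) \<noteq> par (u ! i)) \<and> (par (w ! j) \<noteq> par (u ! j))}"
    unfolding invs_def by (rule arg_cong[where f=card]) (auto simp: gpar_def lw lu)
  show ?thesis
    unfolding z
    unfolding inv_sign_def invs_def C1_def card_DD
    apply (simp only: sum.distrib[symmetric])
    apply (rule dvd_sum)
    subgoal for q
    proof -
      assume "q \<in> DD N"
      then have "fst q < N" "snd q < N" by (auto simp: DD_def)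
      then show ?thesis using lw lu
        by (cases "\<sigma> (snd q) < \<sigma> (fst q)"; cases "par (u ! fst q)"; cases "par (w ! snd q)"; cases "par (w ! fst q)"; cases "par (u ! snd q)") auto
    qed
    done
qed

lemma S3:
  assumes p: "\<sigma> permutes {..<N}" and lw: "length w = N" and lu: "length u = N"
  shows "even (pi_sign par N (Pm N \<sigma> w) (Pm N \<sigma> u) + pi_sign par N w u + C1 par N \<sigma> w u + C1 par N \<sigma> u w)"
proof -
  have "pi_sign par N (Pm N \<sigma> w) (Pm N \<sigma> u) = card {(k,l). k < l \<and> l < N \<and> (\<lambda>i j. par (u ! i) \<and> par (w ! j)) (inv \<sigma> k) (inv \<sigma> l)}"
    unfolding pi_sign_def by (rule arg_cong[where f=card]) (auto simp: Pm_nth)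
  also have "\<dots> = (\<Sum>p\<in>DD N. (if \<sigma> (fst p) < \<sigma> (snd p) \<and> par (u ! fst p) \<and> par (w ! snd p) then 1 else 0)
               + (if \<sigma> (snd p) < \<sigma> (fst p) \<and> par (u ! snd p) \<and> par (w ! fst p) then 1 else 0))"
    by (rule card_reindex[OF p])
  finally have 1: "pi_sign par N (Pm N \<sigma> w) (Pm N \<sigma> u) = \<dots>" .
  have pw: "even ((if \<sigma> (fst q) < \<sigma> (snd q) \<and> par (u ! fst q) \<and> par (w ! snd q) then 1 else 0)
               + (if \<sigma> (snd q) < \<sigma> (fst q) \<and> par (u ! snd q) \<and> par (w ! fst q) then 1 else 0)
     + (if par (u ! fst q) \<and> par (w ! snd q) then 1 else 0)
     + (if \<sigma> (snd q) < \<sigma> (fst q) \<and> par (w ! fst q) \<and> par (u ! snd q) then 1 else 0)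
     + (if \<sigma> (snd q) < \<sigma> (fst q) \<and> par (u ! fst q) \<and> par (w ! snd q) then 1 else (0::nat)))"
    if "q \<in> DD N" for q
  proof -
    obtain i j where q: "q = (i,j)" by (cases q)
    have ij: "i < j" "j < N" using that q by (auto simp: DD_def)
    have sne: "\<sigma> i \<noteq> \<sigma> j" using permutes_inj[OF p] ij by (metis injD less_irrefl)
    then have B: "\<sigma> i < \<sigma> j \<longleftrightarrow> \<not> \<sigma> j < \<sigma> i" by auto
    show ?thesis unfolding q fst_conv snd_conv using B
      by (cases "\<sigma> j < \<sigma> i"; cases "par (u ! i)"; cases "par (w ! j)"; cases "par (w ! i)"; cases "par (u ! j)") auto
  qed
  show ?thesis
    unfolding 1
    unfolding pi_sign_def C1_def card_DD
    by (simp only: sum.distrib[symmetric]) (intro dvd_sum pw)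
qed

lemma SIGN:
  assumes p: "\<sigma> permutes {..<N}" and lw: "length w = N" and lu: "length u = N"
  shows "psign (inv_sign par N \<sigma> u) * psign (invs (gpar par) N \<sigma> (zip w u)) * psign (pi_sign par N (Pm N \<sigma> w) (Pm N \<sigma> u))
       = (psign (pi_sign par N w u) * psign (inv_sign par N (cnj N \<sigma>) (rev w)) :: 'k::comm_ring_1)"
proof -
  have e1: "inv_sign par N (cnj N \<sigma>) (rev w) = invs par N \<sigma> w"
    unfolding inv_sign_def using S1[OF p lw, of par] unfolding invs_def .
  note s2 = S2[OF lw lu, of par \<sigma>]
  note s3 = S3[OF p lw lu, of par]
  have "even ((inv_sign par N \<sigma> u + invs (gpar par) N \<sigma> (zip w u) + pi_sign par N (Pm N \<sigma> w) (Pm N \<sigma> u))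
        + (pi_sign par N w u + inv_sign par N (cnj N \<sigma>) (rev w)))"
    using s2 s3 unfolding e1 by (simp add: algebra_simps) presburger
  then show ?thesis using psign_even by (metis psign_add)
qed




abbreviation PP :: "nat \<Rightarrow> (nat \<Rightarrow> nat) set" where "PP N \<equiv> {\<sigma>. \<sigma> permutes {..<N}}"

lemma finite_PP: "finite (PP N)" by (rule finite_permutations) simp

lemma finite_words: "finite (words d N)"
proof -
  have "words d N = {xs. set xs \<subseteq> {..<d} \<and> length xs = N}" unfolding words_def by auto
  then show ?thesis using finite_lists_length_eq[of "{..<d}" N] by simp
qed

lemma Pm_words: "\<sigma> permutes {..<N} \<Longrightarrow> w \<in> words d N \<Longrightarrow> Pm N \<sigma> w \<in> words d N"
  unfolding words_def using set_Pm by fastforce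

lemma rev_words: "w \<in> words d N \<Longrightarrow> rev w \<in> words d N"
  unfolding words_def by auto

lemma Pm_inv_Pm: assumes p: "\<sigma> permutes {..<N}" and len: "length w = N"
  shows "Pm N (inv \<sigma>) (Pm N \<sigma> w) = w"
proof (rule nth_equalityI)
  fix k assume "k < length (Pm N (inv \<sigma>) (Pm N \<sigma> w))"
  then have k: "k < N" by simp
  have "\<sigma> k < N" using permutes_in_image[OF p] k by simp
  then show "Pm N (inv \<sigma>) (Pm N \<sigma> w) ! k = w ! k"
    using k p by (simp add: Pm_nth inv_inv_eq permutes_bij permutes_inverses(2))
qed (simp add: len)

lemma Pm_Pm_inv: assumes p: "\<sigma> permutes {..<N}" and len: "length w = N"
  shows "Pm N \<sigma> (Pm N (inv \<sigma>) w) = w"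
  using Pm_inv_Pm[OF permutes_inv[OF p] len] p by (simp add: inv_inv_eq permutes_bij)

lemma cperm_eq: "cperm par N \<sigma> u v = psign (inv_sign par N \<sigma> u) * (if v = Pm N \<sigma> u then 1 else 0)"
  by (simp add: cperm_def fa_smult_def mono_def Pm_def)

lemma cY_eq: "cY par N x v = (\<Sum>\<sigma>\<in>PP N. of_int (sign \<sigma>) * psign (inv_sign par N \<sigma> x) * (if v = Pm N \<sigma> x then 1 else 0)) / of_nat (fact N)"
  by (simp add: cY_def cperm_eq mult.assoc)

lemma ortho:
  fixes f :: "(nat, 'k::field) fa"
  assumes f: "f \<in> Rperp par d N" and x: "x \<in> words d N" and nf: "of_nat (fact N) \<noteq> (0::'k)"
  shows "(\<Sum>\<tau>\<in>PP N. of_int (sign \<tau>) * psign (inv_sign par N \<tau> x) * f (rev (Pm N \<tau> x))) = 0"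
proof -
  let ?W = "words d N" and ?nf = "of_nat (fact N) :: 'k"
  let ?a = "\<lambda>\<tau>. of_int (sign \<tau>) * psign (inv_sign par N \<tau> x) :: 'k"
  have r: "cY par N x \<in> Rsp par d N" unfolding Rsp_def using x by (intro lin_span.base) blast
  then have "(\<Sum>v\<in>?W. f (rev v) * cY par N x v) = 0" using f unfolding Rperp_def by blast
  moreover have "(\<Sum>v\<in>?W. f (rev v) * cY par N x v) =
      (\<Sum>v\<in>?W. \<Sum>\<tau>\<in>PP N. if v = Pm N \<tau> x then ?a \<tau> * f (rev v) / ?nf else 0)"
  proof (rule sum.cong[OF refl])
    fix v
    have "f (rev v) * cY par N x v = (\<Sum>\<tau>\<in>PP N. f (rev v) * (?a \<tau> * (if v = Pm N \<tau> x then 1 else 0))) / ?nf"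
      unfolding cY_eq by (simp add: sum_distrib_left)
    also have "\<dots> = (\<Sum>\<tau>\<in>PP N. f (rev v) * (?a \<tau> * (if v = Pm N \<tau> x then 1 else 0)) / ?nf)"
      by (rule sum_divide_distrib)
    also have "\<dots> = (\<Sum>\<tau>\<in>PP N. if v = Pm N \<tau> x then ?a \<tau> * f (rev v) / ?nf else 0)"
      by (rule sum.cong[OF refl]) simp
    finally show "f (rev v) * cY par N x v = (\<Sum>\<tau>\<in>PP N. if v = Pm N \<tau> x then ?a \<tau> * f (rev v) / ?nf else 0)" .
  qed
  moreover have "\<dots> = (\<Sum>\<tau>\<in>PP N. \<Sum>v\<in>?W. if v = Pm N \<tau> x then ?a \<tau> * f (rev v) / ?nf else 0)"
    by (rule sum.swap)
  moreover have "\<dots> = (\<Sum>\<tau>\<in>PP N. ?a \<tau> * f (rev (Pm N \<tau> x)) / ?nf)"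
  proof (rule sum.cong[OF refl])
    fix \<tau> assume "\<tau> \<in> PP N"
    then have "Pm N \<tau> x \<in> ?W" using Pm_words x by blast
    then show "(\<Sum>v\<in>?W. if v = Pm N \<tau> x then ?a \<tau> * f (rev v) / ?nf else 0) = ?a \<tau> * f (rev (Pm N \<tau> x)) / ?nf"
      by (simp add: sum.delta' finite_words)
  qed
  moreover have "\<dots> = (\<Sum>\<tau>\<in>PP N. ?a \<tau> * f (rev (Pm N \<tau> x))) / ?nf"
    by (rule sum_divide_distrib[symmetric])
  ultimately have "(\<Sum>\<tau>\<in>PP N. ?a \<tau> * f (rev (Pm N \<tau> x))) / ?nf = 0" by simp
  then show ?thesis using nf by simp
qed

lemma fact_nz:
  assumes "CHAR('k::field) = 0 \<or> CHAR('k) > N"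
  shows "of_nat (fact N) \<noteq> (0::'k)"
proof -
  have "of_nat i \<noteq> (0::'k)" if "1 \<le> i" "i \<le> N" for i
  proof
    assume "of_nat i = (0::'k)"
    then have "CHAR('k) dvd i" by (simp add: of_nat_eq_0_iff_char_dvd)
    then show False using assms that by (auto dest: dvd_imp_le)
  qed
  then have "(\<Prod>i=1..N. of_nat i :: 'k) \<noteq> 0" by (simp add: prod_zero_iff)
  then show ?thesis by (simp add: fact_prod)
qed




lemma coef_zero:
  fixes f :: "(nat, 'k::field) fa"
  assumes f: "f \<in> Rperp par d N" and u: "u \<in> words d N" and w: "w \<in> words d N"
    and nf: "of_nat (fact N) \<noteq> (0::'k)"
  shows "(\<Sum>\<sigma>\<in>PP N. of_int (sign \<sigma>) * psign (inv_sign par N \<sigma> u) / of_nat (fact N) * f (Pm N \<sigma> w)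
            * psign (pi_sign par N (Pm N \<sigma> w) (Pm N \<sigma> u)) * psign (invs (gpar par) N \<sigma> (zip w u))) = (0::'k)"
proof -
  let ?nf = "of_nat (fact N) :: 'k"
  let ?g = "\<lambda>\<tau>. of_int (sign \<tau>) * psign (inv_sign par N \<tau> (rev w)) * f (rev (Pm N \<tau> (rev w))) :: 'k"
  have lw: "length w = N" and lu: "length u = N" using w u by (auto simp: words_def)
  have "(\<Sum>\<sigma>\<in>PP N. of_int (sign \<sigma>) * psign (inv_sign par N \<sigma> u) / ?nf * f (Pm N \<sigma> w)
            * psign (pi_sign par N (Pm N \<sigma> w) (Pm N \<sigma> u)) * psign (invs (gpar par) N \<sigma> (zip w u)))
      = (\<Sum>\<sigma>\<in>PP N. psign (pi_sign par N w u) / ?nf * ?g (cnj N \<sigma>))"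
  proof (rule sum.cong[OF refl])
    fix \<sigma> assume "\<sigma> \<in> PP N"
    then have p: "\<sigma> permutes {..<N}" by simp
    have e: "rev (Pm N (cnj N \<sigma>) (rev w)) = Pm N \<sigma> w"
      using Pm_cnj_rev[OF p lw] by simp
    have s: "sign (cnj N \<sigma>) = sign \<sigma>" by (rule sign_cnj[OF p])
    have "of_int (sign \<sigma>) * psign (inv_sign par N \<sigma> u) / ?nf * f (Pm N \<sigma> w)
            * psign (pi_sign par N (Pm N \<sigma> w) (Pm N \<sigma> u)) * psign (invs (gpar par) N \<sigma> (zip w u))
        = of_int (sign \<sigma>) / ?nf * f (Pm N \<sigma> w) *
          (psign (inv_sign par N \<sigma> u) * psign (invs (gpar par) N \<sigma> (zip w u)) * psign (pi_sign par N (Pm N \<sigma> w) (Pm N \<sigma> u)))"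
      by (simp add: field_simps)
    also have "\<dots> = of_int (sign \<sigma>) / ?nf * f (Pm N \<sigma> w) *
          (psign (pi_sign par N w u) * psign (inv_sign par N (cnj N \<sigma>) (rev w)))"
      using SIGN[OF p lw lu, of par, where 'k = 'k] by simp
    also have "\<dots> = psign (pi_sign par N w u) / ?nf * ?g (cnj N \<sigma>)"
      using e s by (simp add: field_simps)
    finally show "of_int (sign \<sigma>) * psign (inv_sign par N \<sigma> u) / ?nf * f (Pm N \<sigma> w)
            * psign (pi_sign par N (Pm N \<sigma> w) (Pm N \<sigma> u)) * psign (invs (gpar par) N \<sigma> (zip w u))
        = psign (pi_sign par N w u) / ?nf * ?g (cnj N \<sigma>)" .
  qed
  also have "\<dots> = psign (pi_sign par N w u) / ?nf * (\<Sum>\<sigma>\<in>PP N. ?g (cnj N \<sigma>))"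
    by (simp add: sum_distrib_left)
  also have "(\<Sum>\<sigma>\<in>PP N. ?g (cnj N \<sigma>)) = (\<Sum>\<tau>\<in>PP N. ?g \<tau>)"
    by (rule sum.reindex_bij_witness[where i="cnj N" and j="cnj N"])
       (auto simp: cnj_cnj cnj_permutes)
  also have "\<dots> = 0" using ortho[OF f rev_words[OF w] nf] .
  finally show ?thesis by simp
qed




lemma congr_sum_J:
  "finite A \<Longrightarrow> (\<And>x. x \<in> A \<Longrightarrow> congr (supercomm_ideal par d) (F x) (G x)) \<Longrightarrow>
   congr (supercomm_ideal par d) (\<lambda>w. \<Sum>x\<in>A. F x w) (\<lambda>w. \<Sum>x\<in>A. G x w)"
  unfolding supercomm_ideal_def by (rule congr_sum)

lemma cpi_expand:
  fixes f :: "(nat, 'k::field) fa"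
  assumes u: "u \<in> words d N"
  shows "cpi par d N f (cY par N u) = (\<lambda>t. \<Sum>\<sigma>\<in>PP N. \<Sum>w\<in>words d N.
     (of_int (sign \<sigma>) * psign (inv_sign par N \<sigma> u) / of_nat (fact N) * f w * psign (pi_sign par N w (Pm N \<sigma> u)))
       * mono (zip w (Pm N \<sigma> u)) t)"
proof (rule ext)
  fix t :: "(nat \<times> nat) list"
  let ?W = "words d N" and ?nf = "of_nat (fact N) :: 'k"
  let ?c = "\<lambda>\<sigma>. of_int (sign \<sigma>) * psign (inv_sign par N \<sigma> u) / ?nf :: 'k"
  let ?a = "\<lambda>\<sigma>. of_int (sign \<sigma>) * psign (inv_sign par N \<sigma> u) :: 'k"
  let ?ps = "\<lambda>w v. psign (pi_sign par N w v) :: 'k"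
  have pv: "(if t = zip w v then f w * cY par N u v * ?ps w v else 0) =
     (\<Sum>\<sigma>\<in>PP N. if v = Pm N \<sigma> u then ?c \<sigma> * f w * ?ps w v * mono (zip w v) t else 0)" for w v
  proof (cases "t = zip w v")
    case True
    have "f w * cY par N u v * ?ps w v = (\<Sum>\<sigma>\<in>PP N. f w * (?a \<sigma> * (if v = Pm N \<sigma> u then 1 else 0) / ?nf) * ?ps w v)"
      unfolding cY_eq by (simp add: sum_divide_distrib sum_distrib_left sum_distrib_right)
    also have "\<dots> = (\<Sum>\<sigma>\<in>PP N. if v = Pm N \<sigma> u then ?c \<sigma> * f w * ?ps w v * mono (zip w v) t else 0)"
      by (rule sum.cong[OF refl]) (simp add: True Defs.mono_def)
    finally show ?thesis using True by simp
  next
    case False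
    then have mz: "mono (zip w v) t = (0::'k)" by (simp add: Defs.mono_def)
    show ?thesis using False by (simp only: mz mult_zero_right if_cancel sum.neutral_const if_False)
  qed
  have "cpi par d N f (cY par N u) t = (\<Sum>w\<in>?W. \<Sum>v\<in>?W. \<Sum>\<sigma>\<in>PP N. if v = Pm N \<sigma> u then ?c \<sigma> * f w * ?ps w v * mono (zip w v) t else 0)"
    unfolding cpi_def using pv by simp
  also have "\<dots> = (\<Sum>w\<in>?W. \<Sum>\<sigma>\<in>PP N. \<Sum>v\<in>?W. if v = Pm N \<sigma> u then ?c \<sigma> * f w * ?ps w v * mono (zip w v) t else 0)"
    by (rule sum.cong[OF refl]) (rule sum.swap)
  also have "\<dots> = (\<Sum>\<sigma>\<in>PP N. \<Sum>w\<in>?W. \<Sum>v\<in>?W. if v = Pm N \<sigma> u then ?c \<sigma> * f w * ?ps w v * mono (zip w v) t else 0)"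
    by (rule sum.swap)
  also have "\<dots> = (\<Sum>\<sigma>\<in>PP N. \<Sum>w\<in>?W. ?c \<sigma> * f w * ?ps w (Pm N \<sigma> u) * mono (zip w (Pm N \<sigma> u)) t)"
  proof (rule sum.cong[OF refl], rule sum.cong[OF refl])
    fix \<sigma> w assume "\<sigma> \<in> PP N"
    then have "Pm N \<sigma> u \<in> ?W" using Pm_words u by blast
    then show "(\<Sum>v\<in>?W. if v = Pm N \<sigma> u then ?c \<sigma> * f w * ?ps w v * mono (zip w v) t else 0) =
       ?c \<sigma> * f w * ?ps w (Pm N \<sigma> u) * mono (zip w (Pm N \<sigma> u)) t"
      by (simp add: sum.delta' finite_words)
  qed
  finally show "cpi par d N f (cY par N u) t = (\<Sum>\<sigma>\<in>PP N. \<Sum>w\<in>?W. ?c \<sigma> * f w * ?ps w (Pm N \<sigma> u) * mono (zip w (Pm N \<sigma> u)) t)" .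
qed

lemma zip_words: "w \<in> words d N \<Longrightarrow> u \<in> words d N \<Longrightarrow> set (zip w u) \<subseteq> {..<d} \<times> {..<d} \<and> length (zip w u) = N"
  unfolding words_def by (auto dest: set_zip_leftD set_zip_rightD)

lemma base_in:
  fixes f :: "(nat, 'k::field) fa"
  assumes f: "f \<in> Rperp par d N" and u: "u \<in> words d N" and nf: "of_nat (fact N) \<noteq> (0::'k)"
  shows "cpi par d N f (cY par N u) \<in> supercomm_ideal par d"
proof -
  let ?W = "words d N" and ?nf = "of_nat (fact N) :: 'k"
  let ?c = "\<lambda>\<sigma>. of_int (sign \<sigma>) * psign (inv_sign par N \<sigma> u) / ?nf :: 'k"
  let ?ps = "\<lambda>w v. psign (pi_sign par N w v) :: 'k"
  let ?C = "\<lambda>\<sigma> w. ?c \<sigma> * f (Pm N \<sigma> w) * ?ps (Pm N \<sigma> w) (Pm N \<sigma> u)"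
  let ?ig = "\<lambda>\<sigma> w. psign (invs (gpar par) N \<sigma> (zip w u)) :: 'k"
  have lu: "length u = N" using u by (simp add: words_def)
  have "cpi par d N f (cY par N u) = (\<lambda>t. \<Sum>\<sigma>\<in>PP N. \<Sum>w\<in>?W. ?C \<sigma> w * mono (Pm N \<sigma> (zip w u)) t)"
  proof -
    have "(\<Sum>w\<in>?W. ?c \<sigma> * f w * ?ps w (Pm N \<sigma> u) * mono (zip w (Pm N \<sigma> u)) t) =
          (\<Sum>w\<in>?W. ?C \<sigma> w * mono (Pm N \<sigma> (zip w u)) t)" if s: "\<sigma> \<in> PP N" for \<sigma> t
    proof -
      have p: "\<sigma> permutes {..<N}" using s by simp
      show ?thesis
      proof (rule sum.reindex_bij_witness[where i="Pm N (inv \<sigma>)" and j="Pm N \<sigma>", symmetric])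
        fix a assume a: "a \<in> ?W"
        then have la: "length a = N" by (simp add: words_def)
        show "Pm N (inv \<sigma>) (Pm N \<sigma> a) = a" by (rule Pm_inv_Pm[OF p la])
        show "Pm N \<sigma> a \<in> ?W" by (rule Pm_words[OF p a])
        show "?c \<sigma> * f (Pm N \<sigma> a) * ?ps (Pm N \<sigma> a) (Pm N \<sigma> u) * mono (zip (Pm N \<sigma> a) (Pm N \<sigma> u)) t =
              ?C \<sigma> a * mono (Pm N \<sigma> (zip a u)) t"
          using Pm_zip[OF p la lu] by simp
      next
        fix b assume b: "b \<in> ?W"
        then have lb: "length b = N" by (simp add: words_def)
        show "Pm N \<sigma> (Pm N (inv \<sigma>) b) = b" by (rule Pm_Pm_inv[OF p lb])
        show "Pm N (inv \<sigma>) b \<in> ?W" by (rule Pm_words[OF permutes_inv[OF p] b])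
      qed
    qed
    note eq = this
    show ?thesis unfolding cpi_expand[OF u] by (rule ext, rule sum.cong[OF refl], erule eq)
  qed
  moreover have "congr (supercomm_ideal par d) (\<lambda>t. \<Sum>\<sigma>\<in>PP N. \<Sum>w\<in>?W. ?C \<sigma> w * mono (Pm N \<sigma> (zip w u)) t)
       (\<lambda>t. \<Sum>\<sigma>\<in>PP N. \<Sum>w\<in>?W. ?C \<sigma> w * (?ig \<sigma> w * mono (zip w u) t))"
  proof (rule congr_sum_J[OF finite_PP])
    fix \<sigma> assume s: "\<sigma> \<in> PP N"
    show "congr (supercomm_ideal par d) (\<lambda>t. \<Sum>w\<in>?W. ?C \<sigma> w * mono (Pm N \<sigma> (zip w u)) t)
       (\<lambda>t. \<Sum>w\<in>?W. ?C \<sigma> w * (?ig \<sigma> w * mono (zip w u) t))"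
    proof (rule congr_sum_J[OF finite_words])
      fix w assume w: "w \<in> ?W"
      have c: "congr (supercomm_ideal par d) (mono (Pm N \<sigma> (zip w u))) (fa_smult (?ig \<sigma> w) (mono (zip w u)))"
        using L1[where par=par and d=d, of "zip w u" N \<sigma>] zip_words[OF w u] s by simp
      show "congr (supercomm_ideal par d) (\<lambda>t. ?C \<sigma> w * mono (Pm N \<sigma> (zip w u)) t) (\<lambda>t. ?C \<sigma> w * (?ig \<sigma> w * mono (zip w u) t))"
        using congr_smult[OF c[unfolded supercomm_ideal_def], of "?C \<sigma> w"] by (simp add: fa_smult_def supercomm_ideal_def)
    qed
  qed
  moreover have "(\<lambda>t. \<Sum>\<sigma>\<in>PP N. \<Sum>w\<in>?W. ?C \<sigma> w * (?ig \<sigma> w * mono (zip w u) t)) = (\<lambda>t. 0)"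
  proof (rule ext)
    fix t
    have "(\<Sum>\<sigma>\<in>PP N. \<Sum>w\<in>?W. ?C \<sigma> w * (?ig \<sigma> w * mono (zip w u) t)) =
          (\<Sum>w\<in>?W. \<Sum>\<sigma>\<in>PP N. ?C \<sigma> w * (?ig \<sigma> w * mono (zip w u) t))"
      by (rule sum.swap)
    also have "\<dots> = (\<Sum>w\<in>?W. (\<Sum>\<sigma>\<in>PP N. ?C \<sigma> w * ?ig \<sigma> w) * mono (zip w u) t)"
      by (simp add: sum_distrib_right mult.assoc)
    also have "\<dots> = 0"
    proof (rule sum.neutral, rule ballI)
      fix w assume w: "w \<in> ?W"
      have "(\<Sum>\<sigma>\<in>PP N. ?C \<sigma> w * ?ig \<sigma> w) = 0"
        using coef_zero[OF f u w nf] by simp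
      then show "(\<Sum>\<sigma>\<in>PP N. ?C \<sigma> w * ?ig \<sigma> w) * mono (zip w u) t = 0" by simp
    qed
    finally show "(\<Sum>\<sigma>\<in>PP N. \<Sum>w\<in>?W. ?C \<sigma> w * (?ig \<sigma> w * mono (zip w u) t)) = 0" .
  qed
  ultimately have "congr (supercomm_ideal par d) (cpi par d N f (cY par N u)) (\<lambda>t. 0)" by simp
  then show ?thesis by (simp only: congr_zero_iff)
qed




lemma cpi_lin: "cpi par d N f r t = (\<Sum>u\<in>words d N. r u * (\<Sum>w\<in>words d N. if t = zip w u then f w * psign (pi_sign par N w u) else 0))"
proof -
  have "cpi par d N f r t = (\<Sum>u\<in>words d N. \<Sum>w\<in>words d N. if t = zip w u then f w * r u * psign (pi_sign par N w u) else 0)"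
    unfolding cpi_def by (rule sum.swap)
  also have "\<dots> = (\<Sum>u\<in>words d N. r u * (\<Sum>w\<in>words d N. if t = zip w u then f w * psign (pi_sign par N w u) else 0))"
    by (rule sum.cong[OF refl], simp add: sum_distrib_left, rule sum.cong[OF refl], simp)
  finally show ?thesis .
qed

lemma cpi_in:
  fixes f :: "(nat, 'k::field) fa"
  assumes f: "f \<in> Rperp par d N" and r: "r \<in> Rsp par d N" and nf: "of_nat (fact N) \<noteq> (0::'k)"
  shows "cpi par d N f r \<in> supercomm_ideal par d"
  using r unfolding Rsp_def
proof (induction rule: lin_span.induct)
  case zero
  have "cpi par d N f (\<lambda>w. 0) = (\<lambda>w. 0)" by (rule ext) (simp add: cpi_lin)
  then show ?case unfolding supercomm_ideal_def by (simp add: gen_ideal.zero)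
next
  case (base s)
  then obtain u where "s = cY par N u" "u \<in> words d N" by blast
  then show ?case using base_in[OF f _ nf] by simp
next
  case (add x y)
  have "cpi par d N f (\<lambda>w. x w + y w) = (\<lambda>t. cpi par d N f x t + cpi par d N f y t)"
    by (rule ext) (simp add: cpi_lin distrib_right sum.distrib)
  then show ?case using add.IH unfolding supercomm_ideal_def by (simp add: gen_ideal.add)
next
  case (smult x c)
  have "cpi par d N f (\<lambda>w. c * x w) = fa_smult c (cpi par d N f x)"
    by (rule ext) (simp add: cpi_lin fa_smult_def sum_distrib_left mult.assoc)
  then show ?case using smult.IH unfolding supercomm_ideal_def by (simp add: gen_ideal.smult)
qed

lemma end_sub:
  assumes nf: "of_nat (fact N) \<noteq> (0::'k::field)"
  shows "(end_ideal par d N :: (nat \<times> nat, 'k) fa set) \<subseteq> supercomm_ideal par d"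
proof -
  have "{cpi par d N f r | f r. f \<in> Rperp par d N \<and> r \<in> Rsp par d N} \<subseteq> (supercomm_ideal par d :: (nat \<times> nat, 'k) fa set)"
    using cpi_in nf by blast
  then show ?thesis unfolding end_ideal_def supercomm_ideal_def by (rule gen_ideal_mono)
qed

lemma supp_Delta_finite:
  fixes a :: "(nat \<times> nat, 'k::comm_ring_1) fa"
  assumes "a \<in> Zalg d"
  shows "finite (supp (Delta par d a))"
proof -
  have fa: "finite (supp a)" using assms unfolding Zalg_def fin_def supp_def by simp
  let ?S = "\<Union>w\<in>supp a. (\<lambda>ks. (zip (map fst w) ks, zip ks (map snd w))) ` words d (length w)"
  have "supp (Delta par d a) \<subseteq> ?S"
  proof
    fix p assume "p \<in> supp (Delta par d a)"
    then have "(\<Sum>w\<in>supp a. a w * delta_mono par d w p) \<noteq> 0" unfolding supp_def Delta_def by simp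
    then obtain w where w: "w \<in> supp a" "a w * delta_mono par d w p \<noteq> 0"
      by (rule sum.not_neutral_contains_not_neutral)
    then have "delta_mono par d w p \<noteq> (0::'k)" by auto
    then have "(\<Sum>ks\<in>words d (length w). if p = (zip (map fst w) ks, zip ks (map snd w)) then psign (delta_sign par w ks) else 0) \<noteq> (0::'k)"
      unfolding delta_mono_def by simp
    then obtain ks where "ks \<in> words d (length w)" "(if p = (zip (map fst w) ks, zip ks (map snd w)) then psign (delta_sign par w ks) else 0) \<noteq> (0::'k)"
      by (rule sum.not_neutral_contains_not_neutral)
    then have "ks \<in> words d (length w)" "p = (zip (map fst w) ks, zip ks (map snd w))"
      by (auto split: if_splits)
    then show "p \<in> ?S" using w(1) by (intro UN_I[of w]) simp_all
  qed
  moreover have "finite ?S" by (intro finite_UN_I fa finite_imageI finite_words)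
  ultimately show ?thesis by (rule finite_subset)
qed

lemma tens_map_id:
  fixes T :: "'g list \<times> 'g list \<Rightarrow> 'k::comm_ring_1"
  assumes fin: "finite (supp T)"
  shows "tens_map (\<lambda>x. x) T = T"
proof (rule ext)
  fix q :: "'g list \<times> 'g list"
  obtain w1 w2 where q: "q = (w1, w2)" by (cases q)
  have "tens_map (\<lambda>x. x) T (w1,w2) = (\<Sum>p\<in>supp T. if p = (w1,w2) then T p else 0)"
    unfolding tens_map_def
  proof (simp only: case_prod_conv, rule sum.cong[OF refl])
    fix p :: "'g list \<times> 'g list"
    show "T p * Defs.mono (fst p) w1 * Defs.mono (snd p) w2 = (if p = (w1, w2) then T p else 0)"
      by (cases p) (simp add: Defs.mono_def)
  qed
  also have "\<dots> = T (w1, w2)"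
    using fin by (simp add: sum.delta') (simp add: supp_def)
  finally show "tens_map (\<lambda>x. x) T q = T q" using q by simp
qed

theorem mainTheorem17:
  fixes par :: "nat \<Rightarrow> bool" and d N :: nat
  assumes "CHAR('k::field) = 0 \<or> CHAR('k) > N"
  shows "\<exists>\<phi> :: (nat \<times> nat,'k) fa \<Rightarrow> (nat \<times> nat,'k) fa.
           is_superbialg_hom par d N \<phi> \<and>
           (\<forall>i<d. \<forall>j<d. congr (supercomm_ideal par d) (\<phi> (gen (i,j))) (gen (i,j))) \<and>
           (\<forall>j<d. \<forall>i. congr (supercomm_ideal par d) (\<phi> (coact d j i))
                        (if i < d then gen (i,j) else (\<lambda>w. 0)))"
proof (intro exI[of _ "\<lambda>x. x"] conjI)
  have nf: "of_nat (fact N) \<noteq> (0::'k)" by (rule fact_nz[OF assms])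
  have refl: "congr (supercomm_ideal par d) a a" for a :: "(nat \<times> nat,'k) fa"
    unfolding supercomm_ideal_def by (rule congr_refl)
  have sub: "end_ideal par d N \<subseteq> (supercomm_ideal par d :: (nat \<times> nat,'k) fa set)"
    by (rule end_sub[OF nf])
  have tr: "congr (tens_ideal J) T T" for J and T :: "(nat \<times> nat) list \<times> (nat \<times> nat) list \<Rightarrow> 'k"
    unfolding congr_def tens_ideal_def by (simp add: lin_span.zero)
  show "is_superbialg_hom par d N (\<lambda>x :: (nat \<times> nat,'k) fa. x)"
    unfolding is_superbialg_hom_def Let_def
  proof (intro conjI ballI allI impI)
    fix a b :: "(nat \<times> nat,'k) fa"
    assume "congr (end_ideal par d N) a b"
    then show "congr (supercomm_ideal par d) a b" using sub unfolding congr_def by blast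
  next
    fix a :: "(nat \<times> nat,'k) fa" and p assume "a \<in> Zalg d" "homog par p a"
    then show "\<exists>b\<in>Zalg d. homog par p b \<and> congr (supercomm_ideal par d) a b" using refl by blast
  next
    fix a :: "(nat \<times> nat,'k) fa" assume a: "a \<in> Zalg d"
    show "congr (tens_ideal (supercomm_ideal par d)) (Delta par d a) (tens_map (\<lambda>x. x) (Delta par d a))"
      using tens_map_id[OF supp_Delta_finite[OF a]] tr by simp
  qed (simp_all add: refl)
  show "\<forall>i<d. \<forall>j<d. congr (supercomm_ideal par d) (gen (i,j)) (gen (i,j) :: (nat \<times> nat,'k) fa)"
    using refl by blast
  show "\<forall>j<d. \<forall>i. congr (supercomm_ideal par d) (coact d j i :: (nat \<times> nat,'k) fa)
                        (if i < d then gen (i,j) else (\<lambda>w. 0))"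
    using refl by (simp add: coact_def)
qed



end
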